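(* Let $\beta_1,\dots,\beta_N\in\mathbb R$ with $\beta_a\beta_b\ne0$ for some $a,b$. Then $\widetilde C_\beta$ is an orthogonal projection if and only if $(d-1)\sum_{i=1}^N\beta_i^2+\big(\sum_{i=1}^N\beta_i\big)^2=1$. If this condition holds, then $C_\beta\ge0$ and $\mathrm{Tr}_{\{1,\dots,N\}}C_\beta=I$, so $C_\beta$ is the Choi matrix of a quantum channel $\mathcal M_d\to\mathcal M_d^{\otimes N}$.
   Context: Fix $d\ge2$, $N\ge1$. Tensor factors of $(\mathbb C^d)^{\otimes(N+1)}$ are labelled $0,\dots,N$. For a permutation $\sigma$ of $\{0,\dots,N\}$, $\Pi_\sigma(v_0\otimes\cdots\otimes v_N)=v_{\sigma^{-1}(0)}\otimes\cdots\otimes v_{\sigma^{-1}(N)}$ and $\Pi_\sigma^\Gamma$ is its partial transpose on factor $0$ in the standard basis. For $1\le a,b\le N$, $\Sigma_{a,b}=\{\sigma:\sigma(0)=a,\sigma(b)=0\}$. Define $\widetilde C_\beta=\sum_{1\le a,b\le N}\sum_{\sigma\in\Sigma_{a,b}}\frac{\beta_a\beta_b}{(N-1)!}\Pi_\sigma^\Gamma$ and $C_\beta=\frac{d}{\binom{N+d-1}{N}}\frac{N+d-1}{N}\widetilde C_\beta$. A matrix $C$ is the Choi matrix of a quantum channel iff $C\ge0$ and its partial trace over factors $1,\dots,N$ is $I$ (factor $0$ being the input). *)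

theory Defs
  imports Complex_Main "HOL-Combinatorics.Permutations" "Jordan_Normal_Form.Schur_Decomposition"
begin

text \<open>The Hilbert space (C^d)^{tensor (N+1)} is identified with C^(d^(N+1)); the standard
basis vector |i_0 i_1 ... i_N> (tensor factors 0..N, digits i_k < d) has index
sum_k i_k * d^(N-k), i.e. factor 0 is the most significant digit.\<close>

definition dig :: "nat \<Rightarrow> nat \<Rightarrow> nat \<Rightarrow> nat \<Rightarrow> nat" where
  "dig d N x k = (x div d ^ (N - k)) mod d"

text \<open>Permutation operator: Pi_sigma (v_0 x ... x v_N) = v_{sigma^-1 0} x ... x v_{sigma^-1 N},
so <j| Pi_sigma |i> = 1 iff j_{sigma k} = i_k for all k.\<close>
definition perm_op :: "nat \<Rightarrow> nat \<Rightarrow> (nat \<Rightarrow> nat) \<Rightarrow> complex mat" where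
  "perm_op d N \<sigma> = mat (d ^ (N + 1)) (d ^ (N + 1))
     (\<lambda>(r, c). if (\<forall>k\<le>N. dig d N r (\<sigma> k) = dig d N c k) then 1 else 0)"

text \<open>Partial transpose on tensor factor 0 in the standard basis:
<j_0 j'| X^Gamma |i_0 i'> = <i_0 j'| X |j_0 i'>.\<close>
definition ptrans0 :: "nat \<Rightarrow> nat \<Rightarrow> complex mat \<Rightarrow> complex mat" where
  "ptrans0 d N X = mat (d ^ (N + 1)) (d ^ (N + 1))
     (\<lambda>(r, c). X $$ ((c div d ^ N) * d ^ N + r mod d ^ N, (r div d ^ N) * d ^ N + c mod d ^ N))"

definition Sigma_ab :: "nat \<Rightarrow> nat \<Rightarrow> nat \<Rightarrow> (nat \<Rightarrow> nat) set" where
  "Sigma_ab N a b = {\<sigma>. \<sigma> permutes {0..N} \<and> \<sigma> 0 = a \<and> \<sigma> b = 0}"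

definition Ctilde :: "nat \<Rightarrow> nat \<Rightarrow> (nat \<Rightarrow> real) \<Rightarrow> complex mat" where
  "Ctilde d N \<beta> = mat (d ^ (N + 1)) (d ^ (N + 1))
     (\<lambda>(r, c). \<Sum>a\<in>{1..N}. \<Sum>b\<in>{1..N}. \<Sum>\<sigma>\<in>Sigma_ab N a b.
        complex_of_real (\<beta> a * \<beta> b / fact (N - 1)) * ptrans0 d N (perm_op d N \<sigma>) $$ (r, c))"

definition Cbeta :: "nat \<Rightarrow> nat \<Rightarrow> (nat \<Rightarrow> real) \<Rightarrow> complex mat" where
  "Cbeta d N \<beta> = complex_of_real (real d / real ((N + d - 1) choose N) * (real (N + d - 1) / real N))
     \<cdot>\<^sub>m Ctilde d N \<beta>"

definition orth_proj :: "complex mat \<Rightarrow> bool" where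
  "orth_proj P \<longleftrightarrow> square_mat P \<and> P * P = P \<and> mat_adjoint P = P"

definition psd :: "complex mat \<Rightarrow> bool" where
  "psd A \<longleftrightarrow> square_mat A \<and> mat_adjoint A = A \<and>
     (\<forall>v \<in> carrier_vec (dim_row A). 0 \<le> Re (conjugate v \<bullet> (A *\<^sub>v v)))"

text \<open>Partial trace over tensor factors 1..N (factor 0 kept).\<close>
definition ptrace_rest :: "nat \<Rightarrow> nat \<Rightarrow> complex mat \<Rightarrow> complex mat" where
  "ptrace_rest d N C = mat d d (\<lambda>(p, q). \<Sum>r<d ^ N. C $$ (p * d ^ N + r, q * d ^ N + r))"

definition is_channel_choi :: "nat \<Rightarrow> nat \<Rightarrow> complex mat \<Rightarrow> bool" where
  "is_channel_choi d N C \<longleftrightarrow> C \<in> carrier_mat (d ^ (N + 1)) (d ^ (N + 1)) \<and>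
     psd C \<and> ptrace_rest d N C = 1\<^sub>m d"

end

theory Submission
  imports Defs
begin


lemma mod_pow_digits: "(m::nat) mod d^L = (\<Sum>j<L. (m div d^j mod d) * d^j)"
proof (induction L)
  case 0 then show ?case by simp
next
  case (Suc L)
  have "m mod d^Suc L = d^L * (m div d^L mod d) + m mod d^L"
    by (metis mod_mult2_eq power_Suc2)
  then show ?case using Suc by (simp add: mult.commute)
qed

definition Xs :: "nat \<Rightarrow> nat \<Rightarrow> nat \<Rightarrow> nat \<Rightarrow> nat" where
  "Xs d N m = restrict (dig d N m) {0..N}"

definition DS :: "nat \<Rightarrow> nat \<Rightarrow> (nat \<Rightarrow> nat) set" where
  "DS d N = PiE {0..N} (\<lambda>_. {..<d})"

lemma dig_lt: "0 < d \<Longrightarrow> dig d N m k < d"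
  by (simp add: dig_def)

lemma Xs_in: "0 < d \<Longrightarrow> Xs d N m \<in> DS d N"
  by (auto simp: Xs_def DS_def dig_lt)

lemma Xs_inj: "inj_on (Xs d N) {..<d^(N+1)}"
proof (rule inj_onI)
  fix m m' assume m: "m \<in> {..<d^(N+1)}" and m': "m' \<in> {..<d^(N+1)}" and e: "Xs d N m = Xs d N m'"
  have de: "dig d N m k = dig d N m' k" if "k \<le> N" for k
    using fun_cong[OF e, of k] that by (simp add: Xs_def)
  have "m div d^j mod d = m' div d^j mod d" if "j < N+1" for j
    using de[of "N-j"] that by (simp add: dig_def)
  then have "m mod d^(N+1) = m' mod d^(N+1)"
    unfolding mod_pow_digits by (intro sum.cong) auto
  then show "m = m'" using m m' by simp
qed

lemma card_DS: "card (DS d N) = d^(N+1)"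
  by (simp add: DS_def card_PiE)

lemma Xs_bij: assumes "0 < d" shows "bij_betw (Xs d N) {..<d^(N+1)} (DS d N)"
proof -
  have sub: "Xs d N ` {..<d^(N+1)} \<subseteq> DS d N" using Xs_in assms by auto
  have "card (Xs d N ` {..<d^(N+1)}) = card (DS d N)"
    using card_image[OF Xs_inj] card_DS by simp
  then have "Xs d N ` {..<d^(N+1)} = DS d N"
    using card_subset_eq[OF _ sub] by (simp add: DS_def finite_PiE)
  then show ?thesis using Xs_inj by (simp add: bij_betw_def)
qed

lemma sum_Xs: assumes "0 < d" shows "(\<Sum>m<d^(N+1). F (Xs d N m)) = (\<Sum>x\<in>DS d N. F x)"
  using sum.reindex_bij_betw[OF Xs_bij[OF assms], of F] by simp

lemma Xs_surj: assumes "0 < d" "x \<in> DS d N" shows "\<exists>m<d^(N+1). Xs d N m = x"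
proof -
  have "x \<in> Xs d N ` {..<d^(N+1)}" using Xs_bij[OF assms(1)] assms(2) unfolding bij_betw_def by simp
  then show ?thesis by auto
qed

lemma dig_split:
  assumes "0 < d" "q < d" "s < d^N" "k \<le> N"
  shows "dig d N (q*d^N + s) k = (if k = 0 then q else dig d N s k)"
proof (cases "k = 0")
  case True
  then show ?thesis using assms by (simp add: dig_def)
next
  case False
  define j where "j = N - k"
  have jN: "j < N" and k: "N - k = j" using False assms(4) by (auto simp: j_def)
  have pw: "d^N = d^j * d^(N-j)" using jN by (simp add: power_add[symmetric])
  have "(q*d^N + s) div d^j = (s + (q * d^(N-j)) * d^j) div d^j"
    by (simp add: pw algebra_simps)
  also have "\<dots> = q * d^(N-j) + s div d^j"
    using assms(1) by simp
  finally have "(q*d^N + s) div d^j = q * d^(N-j) + s div d^j" .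
  moreover have "(q * d^(N-j) + s div d^j) mod d = s div d^j mod d"
  proof -
    have "d dvd q * d^(N-j)" using jN by (simp add: dvd_power)
    then show ?thesis by (metis mod_add_left_eq dvd_imp_mod_0 add_0)
  qed
  ultimately show ?thesis using False by (simp add: dig_def k)
qed

lemma dig_mod: assumes "0 < d" "1 \<le> k" "k \<le> N" shows "dig d N (r mod d^N) k = dig d N r k"
proof -
  define j where "j = N - k"
  have jN: "j < N" using assms by (auto simp: j_def)
  have pw: "d^N = d^j * d^(N-j)" using jN by (simp add: power_add[symmetric])
  have e1: "r mod d^N = (r mod d^j) + (r div d^j mod d^(N-j)) * d^j"
    by (metis pw mod_mult2_eq add.commute mult.commute)
  have "r mod d^N div d^j = r div d^j mod d^(N-j)"
    unfolding e1 using assms(1) by simp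
  moreover have "d dvd d^(N-j)" using jN by (simp add: dvd_power)
  ultimately show ?thesis by (simp add: dig_def j_def[symmetric] mod_mod_cancel)
qed

lemma div_dig0: assumes "r < d^(N+1)" shows "r div d^N = dig d N r 0"
proof -
  have "r div d^N < d" using assms
    by (metis less_mult_imp_div_less mult.commute power_Suc Suc_eq_plus1)
  then show ?thesis by (simp add: dig_def)
qed

lemma lt_pow_Suc: assumes "q < (d::nat)" "s < d^N" shows "q*d^N + s < d^(N+1)"
proof -
  have "q*d^N + s < q*d^N + d^N" using assms by simp
  also have "\<dots> = (q+1)*d^N" by simp
  also have "\<dots> \<le> d*d^N" using assms(1) by (intro mult_right_mono) auto
  finally show ?thesis by simp
qed

lemma dig_mix:
  assumes "0 < d" "r < d^(N+1)" "c < d^(N+1)" "j \<le> N"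
  shows "dig d N ((c div d^N)*d^N + r mod d^N) j = (if j = 0 then dig d N c 0 else dig d N r j)"
proof -
  have q: "c div d^N < d" using div_dig0[OF assms(3)] dig_lt[OF assms(1)] by metis
  have s: "r mod d^N < d^N" using assms(1) by simp
  show ?thesis using dig_split[OF assms(1) q s assms(4)] dig_mod[OF assms(1), of j N r] assms
    div_dig0[OF assms(3)] by auto
qed

definition Ent :: "nat \<Rightarrow> nat \<Rightarrow> nat \<Rightarrow> (nat \<Rightarrow> nat) \<Rightarrow> (nat \<Rightarrow> nat) \<Rightarrow> (nat \<Rightarrow> nat) \<Rightarrow> bool" where
  "Ent N a b \<sigma> x y \<longleftrightarrow> x a = x 0 \<and> y b = y 0 \<and> (\<forall>k\<in>{1..N}-{b}. x (\<sigma> k) = y k)"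

lemma Sigma_abD:
  assumes "\<sigma> \<in> Sigma_ab N a b"
  shows "\<sigma> permutes {0..N}" "\<sigma> 0 = a" "\<sigma> b = 0"
  using assms by (auto simp: Sigma_ab_def)

lemma Sigma_ab_range:
  assumes "\<sigma> \<in> Sigma_ab N a b" "a \<in> {1..N}" "b \<in> {1..N}" "k \<in> {1..N}-{b}"
  shows "\<sigma> k \<in> {1..N}-{a}"
proof -
  note D = Sigma_abD[OF assms(1)]
  have "\<sigma> k \<in> {0..N}" using permutes_in_image[OF D(1)] assms(4) by auto
  moreover have "\<sigma> k \<noteq> 0" using D(3) permutes_inj[OF D(1)] assms(4) by (metis DiffE inj_eq singletonI)
  moreover have "\<sigma> k \<noteq> a" using D(2) permutes_inj[OF D(1)] assms(4) by (metis DiffE atLeastAtMost_iff inj_eq not_one_le_zero)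
  ultimately show ?thesis by auto
qed

lemma entry_P:
  assumes d: "0 < d" and r: "r < d^(N+1)" and c: "c < d^(N+1)"
    and s: "\<sigma> \<in> Sigma_ab N a b" and a: "a \<in> {1..N}" and b: "b \<in> {1..N}"
  shows "ptrans0 d N (perm_op d N \<sigma>) $$ (r,c) = (if Ent N a b \<sigma> (Xs d N r) (Xs d N c) then 1 else 0)"
proof -
  define row where "row = (c div d^N)*d^N + r mod d^N"
  define col where "col = (r div d^N)*d^N + c mod d^N"
  have rowlt: "row < d^(N+1)" unfolding row_def
    by (rule lt_pow_Suc) (use div_dig0[OF c] dig_lt[OF d] d in auto)
  have collt: "col < d^(N+1)" unfolding col_def
    by (rule lt_pow_Suc) (use div_dig0[OF r] dig_lt[OF d] d in auto)
  have drow: "dig d N row j = (if j = 0 then dig d N c 0 else dig d N r j)" if "j \<le> N" for j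
    unfolding row_def using dig_mix[OF d r c that] .
  have dcol: "dig d N col j = (if j = 0 then dig d N r 0 else dig d N c j)" if "j \<le> N" for j
    unfolding col_def using dig_mix[OF d c r that] .
  note D = Sigma_abD[OF s]
  have sN: "\<sigma> k \<le> N" if "k \<le> N" for k using permutes_in_image[OF D(1)] that by auto
  have e: "ptrans0 d N (perm_op d N \<sigma>) $$ (r,c) = (if (\<forall>k\<le>N. dig d N row (\<sigma> k) = dig d N col k) then 1 else 0)"
    using r c rowlt collt by (simp add: ptrans0_def perm_op_def row_def col_def)
  have "(\<forall>k\<le>N. dig d N row (\<sigma> k) = dig d N col k) \<longleftrightarrow> Ent N a b \<sigma> (Xs d N r) (Xs d N c)"
  proof
    assume H: "\<forall>k\<le>N. dig d N row (\<sigma> k) = dig d N col k"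
    have 1: "dig d N r a = dig d N r 0" using H[rule_format, of 0] D a drow[of a] dcol[of 0] by auto
    have 2: "dig d N c b = dig d N c 0" using H[rule_format, of b] D b drow[of 0] dcol[of b] by auto
    have 3: "dig d N r (\<sigma> k) = dig d N c k" if "k \<in> {1..N}-{b}" for k
      using H[rule_format, of k] that drow[of "\<sigma> k"] dcol[of k] Sigma_ab_range[OF s a b that] by auto
    show "Ent N a b \<sigma> (Xs d N r) (Xs d N c)"
      unfolding Ent_def Xs_def using 1 2 3 a b Sigma_ab_range[OF s a b] by auto
  next
    assume E: "Ent N a b \<sigma> (Xs d N r) (Xs d N c)"
    have 1: "dig d N r a = dig d N r 0" and 2: "dig d N c b = dig d N c 0"
      and 3: "\<And>k. k \<in> {1..N}-{b} \<Longrightarrow> dig d N r (\<sigma> k) = dig d N c k"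
      using E a b Sigma_ab_range[OF s a b] unfolding Ent_def Xs_def by auto
    show "\<forall>k\<le>N. dig d N row (\<sigma> k) = dig d N col k"
    proof (intro allI impI)
      fix k assume k: "k \<le> N"
      consider "k = 0" | "k = b" | "k \<in> {1..N}-{b}" using k by fastforce
      then show "dig d N row (\<sigma> k) = dig d N col k"
      proof cases
        case 1 then show ?thesis using D a drow[of a] dcol[of 0] \<open>dig d N r a = dig d N r 0\<close> by auto
      next
        case 2 then show ?thesis using D b drow[of 0] dcol[of b] \<open>dig d N c b = dig d N c 0\<close> by auto
      next
        case 3 then show ?thesis using drow[of "\<sigma> k"] dcol[of k] Sigma_ab_range[OF s a b 3] 3
          \<open>\<And>k. k \<in> {1..N}-{b} \<Longrightarrow> dig d N r (\<sigma> k) = dig d N c k\<close> by auto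
      qed
    qed
  qed
  then show ?thesis using e by simp
qed



lemma transpose_perm0N:
  assumes "i \<in> {0..N}" "j \<in> {0..N}" shows "transpose i j permutes {0..N}"
  using permutes_swap_id[OF assms] .

lemma Sigma_ab_reindex:
  assumes a: "a \<in> {1..N}" and b: "b \<in> {1..N}" and a': "a' \<in> {1..N}" and b': "b' \<in> {1..N}"
    and s': "\<sigma>' \<in> Sigma_ab N a' b'"
  shows "bij_betw (\<lambda>\<sigma>. \<sigma> \<circ> transpose a' b \<circ> \<sigma>' \<circ> transpose 0 b') (Sigma_ab N a b) (Sigma_ab N a b')"
proof -
  note D' = Sigma_abD[OF s']
  define f where "f = (\<lambda>\<sigma>::nat\<Rightarrow>nat. \<sigma> \<circ> transpose a' b \<circ> \<sigma>' \<circ> transpose 0 b')"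
  define g where "g = (\<lambda>\<theta>::nat\<Rightarrow>nat. \<theta> \<circ> transpose 0 b' \<circ> inv_into UNIV \<sigma>' \<circ> transpose a' b)"
  have t1: "transpose a' b permutes {0..N}" using a' b by (intro transpose_perm0N) auto
  have t2: "transpose 0 b' permutes {0..N}" using b' by (intro transpose_perm0N) auto
  have iv: "inv_into UNIV \<sigma>' permutes {0..N}" using permutes_inv[OF D'(1)] .
  have i0: "inv_into UNIV \<sigma>' 0 = b'" using D' permutes_inv_eq[OF D'(1)] by simp
  have ia: "inv_into UNIV \<sigma>' a' = 0" using D' permutes_inv_eq[OF D'(1)] by simp
  have fg: "g (f \<sigma>) = \<sigma>" for \<sigma>
    by (rule ext) (simp add: f_def g_def permutes_inverses[OF D'(1)])
  have gf: "f (g \<theta>) = \<theta>" for \<theta>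
    by (rule ext) (simp add: f_def g_def permutes_inverses[OF D'(1)])
  have fin: "f \<sigma> \<in> Sigma_ab N a b'" if "\<sigma> \<in> Sigma_ab N a b" for \<sigma>
  proof -
    note D = Sigma_abD[OF that]
    have "f \<sigma> permutes {0..N}" unfolding f_def
      by (intro permutes_compose D(1) D'(1) t1 t2)
    moreover have "f \<sigma> 0 = a" using D D' a a' b b' by (simp add: f_def)
    moreover have "f \<sigma> b' = 0" using D D' a a' b b' by (simp add: f_def)
    ultimately show ?thesis by (simp add: Sigma_ab_def)
  qed
  have gin: "g \<theta> \<in> Sigma_ab N a b" if "\<theta> \<in> Sigma_ab N a b'" for \<theta>
  proof -
    note D = Sigma_abD[OF that]
    have "g \<theta> permutes {0..N}" unfolding g_def
      by (intro permutes_compose D(1) iv t1 t2)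
    moreover have "g \<theta> 0 = a" using D i0 a a' b b' by (simp add: g_def)
    moreover have "g \<theta> b = 0" using D ia a a' b b' by (simp add: g_def)
    ultimately show ?thesis by (simp add: Sigma_ab_def)
  qed
  show ?thesis unfolding f_def[symmetric]
    by (rule bij_betw_byWitness[where f'=g]) (use fg gf fin gin in auto)
qed

lemma Sigma_ab_param:
  assumes a: "a \<in> {1..N}" and b: "b \<in> {1..N}"
  shows "bij_betw (\<lambda>p. (transpose 0 a \<circ> transpose a b) \<circ> p) {p. p permutes ({1..N}-{b})} (Sigma_ab N a b)"
proof -
  define f where "f = (\<lambda>p::nat\<Rightarrow>nat. (transpose 0 a \<circ> transpose a b) \<circ> p)"
  define g where "g = (\<lambda>\<sigma>::nat\<Rightarrow>nat. (transpose a b \<circ> transpose 0 a) \<circ> \<sigma>)"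
  have t1: "transpose a b permutes {0..N}" using a b by (intro transpose_perm0N) auto
  have t2: "transpose 0 a permutes {0..N}" using a by (intro transpose_perm0N) auto
  have fg: "g (f p) = p" for p by (rule ext) (simp add: f_def g_def)
  have gf: "f (g p) = p" for p by (rule ext) (simp add: f_def g_def)
  have fin: "f p \<in> Sigma_ab N a b" if "p permutes ({1..N}-{b})" for p
  proof -
    have p0: "p 0 = 0" and pb: "p b = b" using permutes_not_in[OF that] by auto
    have "p permutes {0..N}" by (rule permutes_subset[OF that]) auto
    then have "f p permutes {0..N}" unfolding f_def by (intro permutes_compose t1 t2)
    moreover have "f p 0 = a" using p0 a b by (simp add: f_def)
    moreover have "f p b = 0" using pb a b by (simp add: f_def)
    ultimately show ?thesis by (simp add: Sigma_ab_def)
  qed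
  have gin: "g \<sigma> permutes ({1..N}-{b})" if "\<sigma> \<in> Sigma_ab N a b" for \<sigma>
  proof -
    note D = Sigma_abD[OF that]
    have P: "g \<sigma> permutes {0..N}" unfolding g_def by (intro permutes_compose t1 t2 D(1))
    have "g \<sigma> 0 = 0" "g \<sigma> b = b" using D a b by (auto simp: g_def)
    moreover have "x = 0 \<or> x = b" if "x \<in> {0..N} - ({1..N}-{b})" for x using that by auto
    ultimately show ?thesis by (intro permutes_superset[OF P]) blast
  qed
  show ?thesis unfolding f_def[symmetric]
    by (rule bij_betw_byWitness[where f'=g]) (use fg gf fin gin in auto)
qed

lemma card_Sigma_ab:
  assumes a: "a \<in> {1..N}" and b: "b \<in> {1..N}"
  shows "card (Sigma_ab N a b) = fact (N - 1)" "finite (Sigma_ab N a b)"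
proof -
  have c: "card ({1..N}-{b::nat}) = N - 1" using b by simp
  have "card {p. p permutes ({1..N}-{b})} = fact (N-1)"
    by (rule card_permutations[OF c]) simp
  then show "card (Sigma_ab N a b) = fact (N - 1)"
    using bij_betw_same_card[OF Sigma_ab_param[OF a b]] by simp
  show "finite (Sigma_ab N a b)"
    using bij_betw_finite[OF Sigma_ab_param[OF a b]] finite_permutations[of "{1..N}-{b}"] by simp
qed



lemma DS_iff: "x \<in> DS d N \<longleftrightarrow> (\<forall>k\<in>{0..N}. x k < d) \<and> (\<forall>k. k \<notin> {0..N} \<longrightarrow> x k = undefined)"
  by (auto simp: DS_def PiE_iff extensional_def)

lemma Sigma_ab_in0N:
  assumes "\<sigma> \<in> Sigma_ab N a b" "k \<in> {0..N}" shows "\<sigma> k \<in> {0..N}"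
  using permutes_in_image[OF Sigma_abD(1)[OF assms(1)]] assms(2) by simp

lemma prod_count:
  assumes d: "0 < d" and a: "a \<in> {1..N}" and b: "b \<in> {1..N}" and a': "a' \<in> {1..N}" and b': "b' \<in> {1..N}"
    and s: "\<sigma> \<in> Sigma_ab N a b" and s': "\<sigma>' \<in> Sigma_ab N a' b'"
    and x: "x \<in> DS d N" and z: "z \<in> DS d N"
  shows "card {y\<in>DS d N. Ent N a b \<sigma> x y \<and> Ent N a' b' \<sigma>' y z}
     = (if b = a' then d else 1) * (if Ent N a b' (\<sigma> \<circ> transpose a' b \<circ> \<sigma>' \<circ> transpose 0 b') x z then 1 else 0)"
proof -
  define \<theta> where "\<theta> = \<sigma> \<circ> transpose a' b \<circ> \<sigma>' \<circ> transpose 0 b'"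
  define Y where "Y = {y\<in>DS d N. Ent N a b \<sigma> x y \<and> Ent N a' b' \<sigma>' y z}"
  note D = Sigma_abD[OF s] and D' = Sigma_abD[OF s']
  have rg: "\<sigma>' k \<in> {1..N}-{a'}" if "k \<in> {1..N}-{b'}" for k using Sigma_ab_range[OF s' a' b' that] .
  have th: "\<theta> k = (if \<sigma>' k = b then \<sigma> a' else \<sigma> (\<sigma>' k))" if "k \<in> {1..N}-{b'}" for k
    using that rg[OF that] by (auto simp: \<theta>_def transpose_def)
  define cond where "cond = (\<forall>k\<in>{1..N}-{b'}. x (if \<sigma>' k = b then \<sigma> a' else \<sigma> (\<sigma>' k)) = z k)"
  have ET: "Ent N a b' \<theta> x z \<longleftrightarrow> x a = x 0 \<and> z b' = z 0 \<and> cond"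
    unfolding Ent_def cond_def using th by auto
  have xs: "x (\<sigma> k) < d" if "k \<in> {0..N}" for k using x Sigma_ab_in0N[OF s that] by (auto simp: DS_iff)
  have main: "card Y = (if b = a' then d else 1) * (if Ent N a b' \<theta> x z then 1 else 0)"
  proof (cases "x a = x 0 \<and> z b' = z 0")
    case False
    then have "Y = {}" unfolding Y_def Ent_def by auto
    then show ?thesis using False ET by auto
  next
    case H: True
    show ?thesis
    proof (cases "b = a'")
      case False
      define g where "g = (\<lambda>k\<in>{0..N}. if k = 0 \<or> k = b then x (\<sigma> a') else x (\<sigma> k))"
      have a'b: "a' \<in> {1..N}-{b}" using False a' by auto
      have all: "y = g" if "y \<in> Y" for y
      proof (rule ext)
        fix k
        have yD: "y \<in> DS d N" and E1: "Ent N a b \<sigma> x y" and E2: "Ent N a' b' \<sigma>' y z"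
          using that by (auto simp: Y_def)
        show "y k = g k"
        proof (cases "k \<in> {0..N}")
          case False then show ?thesis using yD by (simp add: DS_iff g_def)
        next
          case True
          have y0: "y 0 = x (\<sigma> a')" using E1 E2 a'b unfolding Ent_def by auto
          consider "k = 0" | "k = b" | "k \<in> {1..N}-{b}" using True by fastforce
          then show ?thesis
          proof cases
            case 1 then show ?thesis using y0 by (simp add: g_def)
          next
            case 2 then show ?thesis using y0 E1 b unfolding Ent_def by (simp add: g_def)
          next
            case 3 then show ?thesis using E1 unfolding Ent_def by (auto simp: g_def)
          qed
        qed
      qed
      have gin: "g \<in> Y \<longleftrightarrow> cond"
      proof -
        have gD: "g \<in> DS d N" using xs a' by (auto simp: DS_iff g_def)
        have E1: "Ent N a b \<sigma> x g" using H b unfolding Ent_def g_def by auto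
        have g': "g (\<sigma>' k) = (if \<sigma>' k = b then x (\<sigma> a') else x (\<sigma> (\<sigma>' k)))" if "k \<in> {1..N}-{b'}" for k
          using rg[OF that] by (auto simp: g_def)
        have E2: "Ent N a' b' \<sigma>' g z \<longleftrightarrow> cond"
          unfolding Ent_def cond_def using H a'b g' by (auto simp: g_def)
        show ?thesis using gD E1 E2 by (simp add: Y_def)
      qed
      have "Y = (if cond then {g} else {})" using all gin by auto
      then show ?thesis using False ET H by simp
    next
      case True
      define g where "g = (\<lambda>i. \<lambda>k\<in>{0..N}. if k = 0 \<or> k = b then i else x (\<sigma> k))"
      have cond': "cond \<longleftrightarrow> (\<forall>k\<in>{1..N}-{b'}. x (\<sigma> (\<sigma>' k)) = z k)"
        unfolding cond_def using rg True by auto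
      have all: "y = g (y 0) \<and> y 0 < d \<and> cond" if "y \<in> Y" for y
      proof -
        have yD: "y \<in> DS d N" and E1: "Ent N a b \<sigma> x y" and E2: "Ent N a' b' \<sigma>' y z"
          using that by (auto simp: Y_def)
        have "y = g (y 0)"
        proof (rule ext)
          fix k
          show "y k = g (y 0) k"
          proof (cases "k \<in> {0..N}")
            case False then show ?thesis using yD by (simp add: DS_iff g_def)
          next
            case True
            consider "k = 0" | "k = b" | "k \<in> {1..N}-{b}" using True by fastforce
            then show ?thesis
            proof cases
              case 1 then show ?thesis by (simp add: g_def)
            next
              case 2 then show ?thesis using E1 b unfolding Ent_def by (simp add: g_def)
            next
              case 3 then show ?thesis using E1 unfolding Ent_def by (auto simp: g_def)
            qed
          qed
        qed
        moreover have "y 0 < d" using yD by (simp add: DS_iff)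
        moreover have "cond" unfolding cond'
        proof
          fix k assume k: "k \<in> {1..N}-{b'}"
          have "y (\<sigma>' k) = z k" using E2 k unfolding Ent_def by auto
          moreover have "y (\<sigma>' k) = x (\<sigma> (\<sigma>' k))" using E1 rg[OF k] True unfolding Ent_def by auto
          ultimately show "x (\<sigma> (\<sigma>' k)) = z k" by simp
        qed
        ultimately show ?thesis by simp
      qed
      have gin: "g i \<in> Y" if "i < d" "cond" for i
      proof -
        have gD: "g i \<in> DS d N" using xs that by (auto simp: DS_iff g_def)
        have E1: "Ent N a b \<sigma> x (g i)" using H b unfolding Ent_def g_def by auto
        have "g i (\<sigma>' k) = z k" if k: "k \<in> {1..N}-{b'}" for k
        proof -
          have "\<sigma>' k \<in> {1..N}-{b}" using rg[OF k] True by simp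
          then have "g i (\<sigma>' k) = x (\<sigma> (\<sigma>' k))" by (auto simp: g_def)
          then show ?thesis using \<open>cond\<close> cond' k by simp
        qed
        then have E2: "Ent N a' b' \<sigma>' (g i) z"
          unfolding Ent_def using H True b by (auto simp: g_def)
        show ?thesis using gD E1 E2 by (simp add: Y_def)
      qed
      have inj: "inj_on g {..<d}"
      proof (rule inj_onI)
        fix i j assume "g i = g j" then have "g i 0 = g j 0" by simp
        then show "i = j" by (simp add: g_def)
      qed
      have "Y = (if cond then g ` {..<d} else {})"
      proof (cases cond)
        case True then show ?thesis using all gin by (auto intro!: image_eqI)
      next
        case False then show ?thesis using all by auto
      qed
      then have "card Y = (if cond then d else 0)" using card_image[OF inj] by simp
      then show ?thesis using True ET H by simp
    qed
  qed
  then show ?thesis by (simp add: Y_def \<theta>_def)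
qed



definition U :: "nat \<Rightarrow> nat \<Rightarrow> nat \<Rightarrow> (nat \<Rightarrow> nat) \<Rightarrow> (nat \<Rightarrow> nat) \<Rightarrow> real" where
  "U N a b x y = (\<Sum>\<sigma>\<in>Sigma_ab N a b. if Ent N a b \<sigma> x y then 1 else 0)"

lemma sum_indicator_card: "finite A \<Longrightarrow> (\<Sum>y\<in>A. if P y then 1 else 0) = (real (card {y\<in>A. P y}))"
  by (simp add: sum.inter_filter[symmetric])

lemma finite_DS: "finite (DS d N)" by (simp add: DS_def finite_PiE)

lemma U_prod:
  assumes d: "0 < d" and a: "a \<in> {1..N}" and b: "b \<in> {1..N}" and a': "a' \<in> {1..N}" and b': "b' \<in> {1..N}"
    and x: "x \<in> DS d N" and z: "z \<in> DS d N"
  shows "(\<Sum>y\<in>DS d N. U N a b x y * U N a' b' y z)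
     = (if b = a' then real d else 1) * fact (N-1) * U N a b' x z"
proof -
  let ?S = "Sigma_ab N a b" and ?S' = "Sigma_ab N a' b'"
  let ?k = "(if b = a' then real d else 1)"
  have fS: "finite ?S" "finite ?S'" using card_Sigma_ab a b a' b' by auto
  have "(\<Sum>y\<in>DS d N. U N a b x y * U N a' b' y z)
      = (\<Sum>y\<in>DS d N. \<Sum>\<sigma>\<in>?S. \<Sum>\<sigma>'\<in>?S'. (if Ent N a b \<sigma> x y then 1 else 0) * (if Ent N a' b' \<sigma>' y z then 1 else 0))"
    unfolding U_def by (simp add: sum_product)
  also have "\<dots> = (\<Sum>\<sigma>\<in>?S. \<Sum>\<sigma>'\<in>?S'. \<Sum>y\<in>DS d N. (if Ent N a b \<sigma> x y \<and> Ent N a' b' \<sigma>' y z then 1 else 0))"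
  proof -
    have "(\<Sum>y\<in>DS d N. \<Sum>\<sigma>\<in>?S. \<Sum>\<sigma>'\<in>?S'. (if Ent N a b \<sigma> x y then 1 else 0) * (if Ent N a' b' \<sigma>' y z then 1 else (0::real)))
       = (\<Sum>\<sigma>\<in>?S. \<Sum>y\<in>DS d N. \<Sum>\<sigma>'\<in>?S'. (if Ent N a b \<sigma> x y then 1 else 0) * (if Ent N a' b' \<sigma>' y z then 1 else (0::real)))"
      by (rule sum.swap)
    also have "\<dots> = (\<Sum>\<sigma>\<in>?S. \<Sum>\<sigma>'\<in>?S'. \<Sum>y\<in>DS d N. (if Ent N a b \<sigma> x y then 1 else 0) * (if Ent N a' b' \<sigma>' y z then 1 else (0::real)))"
      by (rule sum.cong[OF refl], rule sum.swap)
    also have "\<dots> = (\<Sum>\<sigma>\<in>?S. \<Sum>\<sigma>'\<in>?S'. \<Sum>y\<in>DS d N. (if Ent N a b \<sigma> x y \<and> Ent N a' b' \<sigma>' y z then 1 else (0::real)))"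
      by (intro sum.cong refl) simp
    finally show ?thesis .
  qed
  also have "\<dots> = (\<Sum>\<sigma>\<in>?S. \<Sum>\<sigma>'\<in>?S'. ?k * (if Ent N a b' (\<sigma> \<circ> transpose a' b \<circ> \<sigma>' \<circ> transpose 0 b') x z then 1 else 0))"
  proof (intro sum.cong refl)
    fix \<sigma> \<sigma>' assume s: "\<sigma> \<in> ?S" and s': "\<sigma>' \<in> ?S'"
    show "(\<Sum>y\<in>DS d N. (if Ent N a b \<sigma> x y \<and> Ent N a' b' \<sigma>' y z then 1 else 0)) =
       ?k * (if Ent N a b' (\<sigma> \<circ> transpose a' b \<circ> \<sigma>' \<circ> transpose 0 b') x z then 1 else (0::real))"
      using sum_indicator_card[OF finite_DS] prod_count[OF d a b a' b' s s' x z] by simp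
  qed
  also have "\<dots> = ?k * (\<Sum>\<sigma>'\<in>?S'. \<Sum>\<sigma>\<in>?S. (if Ent N a b' (\<sigma> \<circ> transpose a' b \<circ> \<sigma>' \<circ> transpose 0 b') x z then 1 else 0))"
    by (subst sum.swap) (simp add: sum_distrib_left)
  also have "\<dots> = ?k * (\<Sum>\<sigma>'\<in>?S'. U N a b' x z)"
  proof -
    have "(\<Sum>\<sigma>\<in>?S. (if Ent N a b' (\<sigma> \<circ> transpose a' b \<circ> \<sigma>' \<circ> transpose 0 b') x z then 1 else 0)) = U N a b' x z"
      if s': "\<sigma>' \<in> ?S'" for \<sigma>'
      unfolding U_def
      using sum.reindex_bij_betw[OF Sigma_ab_reindex[OF a b a' b' s'], of "\<lambda>\<theta>. if Ent N a b' \<theta> x z then 1 else (0::real)"]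
      by simp
    then show ?thesis by simp
  qed
  also have "\<dots> = ?k * fact (N-1) * U N a b' x z"
    using card_Sigma_ab[OF a' b'] by simp
  finally show ?thesis .
qed

definition T :: "nat \<Rightarrow> (nat \<Rightarrow> real) \<Rightarrow> (nat \<Rightarrow> nat) \<Rightarrow> (nat \<Rightarrow> nat) \<Rightarrow> real" where
  "T N \<beta> x y = (\<Sum>a\<in>{1..N}. \<Sum>b\<in>{1..N}. \<beta> a * \<beta> b / fact (N - 1) * U N a b x y)"

lemma kappa_sum:
  fixes \<beta> :: "nat \<Rightarrow> real" and N d :: nat
  shows "(\<Sum>b\<in>{1..N}. \<Sum>a'\<in>{1..N}. \<beta> b * \<beta> a' * (if b = a' then real d else 1))
   = (real d - 1) * (\<Sum>i=1..N. (\<beta> i)\<^sup>2) + (\<Sum>i=1..N. \<beta> i)\<^sup>2"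
proof -
  have "(\<Sum>b\<in>{1..N}. \<Sum>a'\<in>{1..N}. \<beta> b * \<beta> a' * (if b = a' then real d else 1))
    = (\<Sum>b\<in>{1..N}. \<Sum>a'\<in>{1..N}. \<beta> b * \<beta> a' + (if b = a' then (real d - 1) * \<beta> b * \<beta> a' else 0))"
    by (intro sum.cong refl) (auto simp: algebra_simps)
  also have "\<dots> = (\<Sum>b\<in>{1..N}. \<Sum>a'\<in>{1..N}. \<beta> b * \<beta> a') + (\<Sum>b\<in>{1..N}. \<Sum>a'\<in>{1..N}. (if b = a' then (real d - 1) * \<beta> b * \<beta> a' else 0))"
    by (simp add: sum.distrib)
  also have "\<dots> = (\<Sum>b\<in>{1..N}. \<Sum>a'\<in>{1..N}. \<beta> b * \<beta> a') + (\<Sum>b\<in>{1..N}. (real d - 1) * \<beta> b * \<beta> b)"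
  proof -
    have "(\<Sum>a'\<in>{1..N}. (if b = a' then (real d - 1) * \<beta> b * \<beta> a' else 0)) = (real d - 1) * \<beta> b * \<beta> b"
      if "b \<in> {1..N}" for b
    proof -
      have "(\<Sum>a'\<in>{1..N}. (if b = a' then (real d - 1) * \<beta> b * \<beta> a' else 0))
          = (\<Sum>a'\<in>{1..N}. (if b = a' then (real d - 1) * \<beta> b * \<beta> b else 0))"
        by (rule sum.cong) auto
      also have "\<dots> = (real d - 1) * \<beta> b * \<beta> b"
        using sum.delta'[of "{1..N}" b "\<lambda>_. (real d - 1) * \<beta> b * \<beta> b"] that by simp
      finally show ?thesis .
    qed
    then show ?thesis by simp
  qed
  also have "\<dots> = (\<Sum>i=1..N. \<beta> i)\<^sup>2 + (real d - 1) * (\<Sum>i=1..N. (\<beta> i)\<^sup>2)"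
    by (simp add: power2_eq_square sum_product mult.assoc sum_distrib_left[symmetric])
  finally show ?thesis by simp
qed

lemma T_sq:
  assumes d: "0 < d" and x: "x \<in> DS d N" and z: "z \<in> DS d N"
  shows "(\<Sum>y\<in>DS d N. T N \<beta> x y * T N \<beta> y z)
     = ((real d - 1) * (\<Sum>i=1..N. (\<beta> i)\<^sup>2) + (\<Sum>i=1..N. \<beta> i)\<^sup>2) * T N \<beta> x z"
proof -
  let ?f = "fact (N - 1) :: real"
  let ?I = "{1..N}"
  have f0: "?f \<noteq> 0" by simp
  have "(\<Sum>y\<in>DS d N. T N \<beta> x y * T N \<beta> y z)
     = (\<Sum>a\<in>?I. \<Sum>b\<in>?I. \<Sum>a'\<in>?I. \<Sum>b'\<in>?I. (\<beta> a * \<beta> b / ?f) * (\<beta> a' * \<beta> b' / ?f) *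
           (\<Sum>y\<in>DS d N. U N a b x y * U N a' b' y z))"
  proof -
    have e: "T N \<beta> x y * T N \<beta> y z = (\<Sum>a\<in>?I. \<Sum>b\<in>?I. \<Sum>a'\<in>?I. \<Sum>b'\<in>?I. (\<beta> a * \<beta> b / ?f) * (\<beta> a' * \<beta> b' / ?f) *
           (U N a b x y * U N a' b' y z))" for y
    proof -
      have "T N \<beta> x y * T N \<beta> y z = (\<Sum>a\<in>?I. \<Sum>a'\<in>?I. (\<Sum>b\<in>?I. \<beta> a * \<beta> b / ?f * U N a b x y) * (\<Sum>b'\<in>?I. \<beta> a' * \<beta> b' / ?f * U N a' b' y z))"
        unfolding T_def by (rule sum_product)
      also have "\<dots> = (\<Sum>a\<in>?I. \<Sum>a'\<in>?I. \<Sum>b\<in>?I. \<Sum>b'\<in>?I. (\<beta> a * \<beta> b / ?f * U N a b x y) * (\<beta> a' * \<beta> b' / ?f * U N a' b' y z))"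
        by (simp add: sum_product)
      also have "\<dots> = (\<Sum>a\<in>?I. \<Sum>b\<in>?I. \<Sum>a'\<in>?I. \<Sum>b'\<in>?I. (\<beta> a * \<beta> b / ?f * U N a b x y) * (\<beta> a' * \<beta> b' / ?f * U N a' b' y z))"
        by (rule sum.cong[OF refl], rule sum.swap)
      also have "\<dots> = (\<Sum>a\<in>?I. \<Sum>b\<in>?I. \<Sum>a'\<in>?I. \<Sum>b'\<in>?I. (\<beta> a * \<beta> b / ?f) * (\<beta> a' * \<beta> b' / ?f) *
           (U N a b x y * U N a' b' y z))"
        by (intro sum.cong refl) simp
      finally show ?thesis .
    qed
    have sw: "(\<Sum>y\<in>Y. \<Sum>a\<in>A. G y a) = (\<Sum>a\<in>A. \<Sum>y\<in>Y. G y a)" for Y A and G :: "_ \<Rightarrow> _ \<Rightarrow> real"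
      by (rule sum.swap)
    show ?thesis unfolding e
      apply (rule trans[OF sum.swap]) apply (rule sum.cong[OF refl])
      apply (rule trans[OF sum.swap]) apply (rule sum.cong[OF refl])
      apply (rule trans[OF sum.swap]) apply (rule sum.cong[OF refl])
      apply (rule trans[OF sum.swap]) apply (rule sum.cong[OF refl])
      by (simp add: sum_distrib_left)
  qed
  also have "\<dots> = (\<Sum>a\<in>?I. \<Sum>b\<in>?I. \<Sum>a'\<in>?I. \<Sum>b'\<in>?I. (\<beta> a * \<beta> b' / ?f * U N a b' x z) *
          (\<beta> b * \<beta> a' * (if b = a' then real d else 1)))"
    apply (intro sum.cong refl)
    by (subst U_prod[OF d _ _ _ _ x z], auto)
  also have "\<dots> = (\<Sum>a\<in>?I. \<Sum>b'\<in>?I. (\<beta> a * \<beta> b' / ?f * U N a b' x z) *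
          (\<Sum>b\<in>?I. \<Sum>a'\<in>?I. \<beta> b * \<beta> a' * (if b = a' then real d else 1)))"
  proof -
    have sw: "(\<Sum>y\<in>Y. \<Sum>a\<in>A. G y a) = (\<Sum>a\<in>A. \<Sum>y\<in>Y. G y a)" for Y A and G :: "_ \<Rightarrow> _ \<Rightarrow> real"
      by (rule sum.swap)
    show ?thesis
    proof (rule sum.cong[OF refl])
      fix a
      let ?F = "\<lambda>b a' b'. (\<beta> a * \<beta> b' / ?f * U N a b' x z) * (\<beta> b * \<beta> a' * (if b = a' then real d else 1))"
      have "(\<Sum>b\<in>?I. \<Sum>a'\<in>?I. \<Sum>b'\<in>?I. ?F b a' b') = (\<Sum>b\<in>?I. \<Sum>b'\<in>?I. \<Sum>a'\<in>?I. ?F b a' b')"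
        by (rule sum.cong[OF refl], rule sum.swap)
      also have "\<dots> = (\<Sum>b'\<in>?I. \<Sum>b\<in>?I. \<Sum>a'\<in>?I. ?F b a' b')"
        by (rule sum.swap)
      also have "\<dots> = (\<Sum>b'\<in>?I. (\<beta> a * \<beta> b' / ?f * U N a b' x z) *
          (\<Sum>b\<in>?I. \<Sum>a'\<in>?I. \<beta> b * \<beta> a' * (if b = a' then real d else 1)))"
        by (rule sum.cong[OF refl]) (simp add: sum_distrib_left)
      finally show "(\<Sum>b\<in>?I. \<Sum>a'\<in>?I. \<Sum>b'\<in>?I. ?F b a' b') = (\<Sum>b'\<in>?I. (\<beta> a * \<beta> b' / ?f * U N a b' x z) *
          (\<Sum>b\<in>?I. \<Sum>a'\<in>?I. \<beta> b * \<beta> a' * (if b = a' then real d else 1)))" .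
    qed
  qed
  also have "\<dots> = (\<Sum>a\<in>?I. \<Sum>b'\<in>?I. ((real d - 1) * (\<Sum>i=1..N. (\<beta> i)\<^sup>2) + (\<Sum>i=1..N. \<beta> i)\<^sup>2) * (\<beta> a * \<beta> b' / ?f * U N a b' x z))"
    unfolding kappa_sum by (intro sum.cong refl) simp
  also have "\<dots> = ((real d - 1) * (\<Sum>i=1..N. (\<beta> i)\<^sup>2) + (\<Sum>i=1..N. \<beta> i)\<^sup>2) * T N \<beta> x z"
    unfolding T_def by (simp add: sum_distrib_left)
  finally show ?thesis .
qed



lemma Ctilde_dim: "Ctilde d N \<beta> \<in> carrier_mat (d^(N+1)) (d^(N+1))"
  by (simp add: Ctilde_def)

lemma Ctilde_entry:
  assumes d: "0 < d" and r: "r < d^(N+1)" and c: "c < d^(N+1)"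
  shows "Ctilde d N \<beta> $$ (r,c) = complex_of_real (T N \<beta> (Xs d N r) (Xs d N c))"
proof -
  have "Ctilde d N \<beta> $$ (r,c) = (\<Sum>a\<in>{1..N}. \<Sum>b\<in>{1..N}. \<Sum>\<sigma>\<in>Sigma_ab N a b.
        complex_of_real (\<beta> a * \<beta> b / fact (N - 1)) * ptrans0 d N (perm_op d N \<sigma>) $$ (r, c))"
    using r c by (simp add: Ctilde_def)
  also have "\<dots> = (\<Sum>a\<in>{1..N}. \<Sum>b\<in>{1..N}. \<Sum>\<sigma>\<in>Sigma_ab N a b.
        complex_of_real (\<beta> a * \<beta> b / fact (N - 1) * (if Ent N a b \<sigma> (Xs d N r) (Xs d N c) then 1 else 0)))"
    by (intro sum.cong refl) (simp add: entry_P[OF d r c])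
  also have "\<dots> = complex_of_real (T N \<beta> (Xs d N r) (Xs d N c))"
    unfolding T_def U_def of_real_sum sum_distrib_left by simp
  finally show ?thesis .
qed

lemma Ctilde_sq:
  assumes d: "0 < d"
  shows "Ctilde d N \<beta> * Ctilde d N \<beta> =
    complex_of_real ((real d - 1) * (\<Sum>i=1..N. (\<beta> i)\<^sup>2) + (\<Sum>i=1..N. \<beta> i)\<^sup>2) \<cdot>\<^sub>m Ctilde d N \<beta>"
    (is "?L = ?c \<cdot>\<^sub>m ?C")
proof (rule eq_matI)
  let ?D = "d^(N+1)"
  show "dim_row ?L = dim_row (?c \<cdot>\<^sub>m ?C)" "dim_col ?L = dim_col (?c \<cdot>\<^sub>m ?C)"
    by (simp_all add: Ctilde_def)
  fix r c assume "r < dim_row (?c \<cdot>\<^sub>m ?C)" "c < dim_col (?c \<cdot>\<^sub>m ?C)"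
  then have r: "r < ?D" and c: "c < ?D" by (simp_all add: Ctilde_def)
  have "?L $$ (r,c) = (\<Sum>m\<in>{0..<?D}. ?C $$ (r,m) * ?C $$ (m,c))"
    using r c by (simp add: Ctilde_def scalar_prod_def)
  also have "\<dots> = (\<Sum>m<?D. complex_of_real (T N \<beta> (Xs d N r) (Xs d N m) * T N \<beta> (Xs d N m) (Xs d N c)))"
    by (simp add: lessThan_atLeast0 Ctilde_entry[OF d r] Ctilde_entry[OF d _ c])
  also have "\<dots> = complex_of_real (\<Sum>y\<in>DS d N. T N \<beta> (Xs d N r) y * T N \<beta> y (Xs d N c))"
    unfolding of_real_sum[symmetric] using sum_Xs[OF d, of "\<lambda>y. T N \<beta> (Xs d N r) y * T N \<beta> y (Xs d N c)" N] by simp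
  also have "\<dots> = ?c * ?C $$ (r,c)"
    using T_sq[OF d Xs_in[OF d] Xs_in[OF d]] Ctilde_entry[OF d r c] by simp
  finally show "?L $$ (r,c) = (?c \<cdot>\<^sub>m ?C) $$ (r,c)" using r c by (simp add: Ctilde_def)
qed

lemma Ent_inv:
  assumes s: "\<sigma> \<in> Sigma_ab N a b" and a: "a \<in> {1..N}" and b: "b \<in> {1..N}"
  shows "Ent N a b \<sigma> x y \<longleftrightarrow> Ent N b a (inv_into UNIV \<sigma>) y x"
proof -
  note D = Sigma_abD[OF s]
  have r1: "\<And>k. k \<in> {1..N}-{b} \<Longrightarrow> \<sigma> k \<in> {1..N}-{a}" using Sigma_ab_range[OF s a b] .
  have r2: "inv_into UNIV \<sigma> k \<in> {1..N}-{b}" if k: "k \<in> {1..N}-{a}" for k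
  proof -
    have "inv_into UNIV \<sigma> k \<in> {0..N}" using k permutes_in_image[OF permutes_inv[OF D(1)]] by auto
    moreover have "inv_into UNIV \<sigma> k \<noteq> 0" using k D permutes_inv_eq[OF D(1)] by auto
    moreover have "inv_into UNIV \<sigma> k \<noteq> b" using k D permutes_inv_eq[OF D(1)] by auto
    ultimately show ?thesis by auto
  qed
  show ?thesis
    unfolding Ent_def
    using r1 r2 permutes_inverses[OF D(1)] by metis
qed

lemma inv_Sigma:
  assumes a: "a \<in> {1..N}" and b: "b \<in> {1..N}"
  shows "bij_betw (inv_into UNIV) (Sigma_ab N a b) (Sigma_ab N b a)"
proof (rule bij_betw_byWitness[where f'="inv_into UNIV"])
  show "\<forall>\<sigma>\<in>Sigma_ab N a b. inv_into UNIV (inv_into UNIV \<sigma>) = \<sigma>"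
    using permutes_inv_inv Sigma_abD(1) by blast
  show "\<forall>\<sigma>\<in>Sigma_ab N b a. inv_into UNIV (inv_into UNIV \<sigma>) = \<sigma>"
    using permutes_inv_inv Sigma_abD(1) by blast
  have "inv_into UNIV \<sigma> \<in> Sigma_ab N b' a'" if "\<sigma> \<in> Sigma_ab N a' b'" for \<sigma> a' b'
  proof -
    note D = Sigma_abD[OF that]
    show ?thesis using permutes_inv[OF D(1)] permutes_inv_eq[OF D(1)] D by (simp add: Sigma_ab_def)
  qed
  then show "inv_into UNIV ` Sigma_ab N a b \<subseteq> Sigma_ab N b a" "inv_into UNIV ` Sigma_ab N b a \<subseteq> Sigma_ab N a b"
    by blast+
qed

lemma U_sym:
  assumes a: "a \<in> {1..N}" and b: "b \<in> {1..N}"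
  shows "U N a b x y = U N b a y x"
proof -
  have "U N b a y x = (\<Sum>\<sigma>\<in>Sigma_ab N a b. if Ent N b a (inv_into UNIV \<sigma>) y x then 1 else 0)"
    unfolding U_def using sum.reindex_bij_betw[OF inv_Sigma[OF a b], of "\<lambda>\<tau>. if Ent N b a \<tau> y x then 1 else (0::real)"]
    by simp
  also have "\<dots> = U N a b x y" unfolding U_def
    by (intro sum.cong refl) (simp add: Ent_inv[OF _ a b])
  finally show ?thesis by simp
qed

lemma T_sym: "T N \<beta> x y = T N \<beta> y x"
proof -
  have "T N \<beta> y x = (\<Sum>a\<in>{1..N}. \<Sum>b\<in>{1..N}. \<beta> a * \<beta> b / fact (N - 1) * U N b a x y)"
    unfolding T_def
  proof (intro sum.cong refl)
    fix a b assume "a \<in> {1..N}" "b \<in> {1..N}"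
    then show "\<beta> a * \<beta> b / fact (N - 1) * U N a b y x = \<beta> a * \<beta> b / fact (N - 1) * U N b a x y"
      using U_sym[of a N b y x] by simp
  qed
  also have "\<dots> = (\<Sum>b\<in>{1..N}. \<Sum>a\<in>{1..N}. \<beta> a * \<beta> b / fact (N - 1) * U N b a x y)"
    by (rule sum.swap)
  also have "\<dots> = T N \<beta> x y" unfolding T_def by (intro sum.cong refl) (simp add: mult.commute)
  finally show ?thesis by simp
qed

lemma Ctilde_herm:
  assumes d: "0 < d"
  shows "mat_adjoint (Ctilde d N \<beta>) = Ctilde d N \<beta>"
proof (rule eq_matI)
  show "dim_row (mat_adjoint (Ctilde d N \<beta>)) = dim_row (Ctilde d N \<beta>)"
       "dim_col (mat_adjoint (Ctilde d N \<beta>)) = dim_col (Ctilde d N \<beta>)"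
    by (simp_all add: mat_adjoint_def mat_of_rows_def Ctilde_def)
  fix i j assume "i < dim_row (Ctilde d N \<beta>)" "j < dim_col (Ctilde d N \<beta>)"
  then have i: "i < d^(N+1)" and j: "j < d^(N+1)" by (simp_all add: Ctilde_def)
  have "mat_adjoint (Ctilde d N \<beta>) $$ (i,j) = conjugate (Ctilde d N \<beta> $$ (j,i))"
    using i j by (simp add: mat_adjoint_def mat_of_rows_def Ctilde_def)
  also have "\<dots> = Ctilde d N \<beta> $$ (i,j)"
    using Ctilde_entry[OF d i j] Ctilde_entry[OF d j i] T_sym by simp
  finally show "mat_adjoint (Ctilde d N \<beta>) $$ (i,j) = Ctilde d N \<beta> $$ (i,j)" .
qed



definition Inv :: "nat \<Rightarrow> nat set \<Rightarrow> (nat \<Rightarrow> nat) \<Rightarrow> (nat \<Rightarrow> nat) set" where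
  "Inv d S \<pi> = {y \<in> PiE S (\<lambda>_. {..<d}). \<forall>k\<in>S. y (\<pi> k) = y k}"

lemma finite_Inv: "finite S \<Longrightarrow> finite (Inv d S \<pi>)"
  by (simp add: Inv_def finite_PiE)

lemma Inv_insert_same:
  assumes fin: "finite S0" and bS: "b \<notin> S0" and p: "p permutes S0"
  shows "card (Inv d (insert b S0) p) = d * card (Inv d S0 p)"
proof -
  have pb: "p b = b" using permutes_not_in[OF p bS] .
  have pS: "p k \<in> S0" if "k \<in> S0" for k using permutes_in_image[OF p] that by simp
  define f where "f = (\<lambda>y::nat\<Rightarrow>nat. (y b, restrict y S0))"
  define g where "g = (\<lambda>(i::nat, z::nat\<Rightarrow>nat). z(b := i))"
  have "bij_betw f (Inv d (insert b S0) p) ({..<d} \<times> Inv d S0 p)"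
  proof (rule bij_betw_byWitness[where f'=g])
    show "\<forall>y\<in>Inv d (insert b S0) p. g (f y) = y"
    proof
      fix y assume y: "y \<in> Inv d (insert b S0) p"
      show "g (f y) = y"
      proof
        fix k show "g (f y) k = y k"
          using y by (cases "k = b"; cases "k \<in> S0") (auto simp: f_def g_def Inv_def PiE_iff extensional_def)
      qed
    qed
    show "\<forall>w\<in>{..<d} \<times> Inv d S0 p. f (g w) = w"
    proof
      fix w assume w: "w \<in> {..<d} \<times> Inv d S0 p"
      obtain i z where wz: "w = (i, z)" by (cases w)
      have "restrict (z(b := i)) S0 = z"
      proof
        fix k show "restrict (z(b := i)) S0 k = z k"
          using w wz bS by (cases "k \<in> S0") (auto simp: Inv_def PiE_iff extensional_def)
      qed
      then show "f (g w) = w" by (simp add: f_def g_def wz)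
    qed
    show "f ` Inv d (insert b S0) p \<subseteq> {..<d} \<times> Inv d S0 p"
      using pS by (auto simp: f_def Inv_def PiE_iff)
    show "g ` ({..<d} \<times> Inv d S0 p) \<subseteq> Inv d (insert b S0) p"
    proof
      fix y assume "y \<in> g ` ({..<d} \<times> Inv d S0 p)"
      then obtain i z where i: "i < d" and z: "z \<in> Inv d S0 p" and y: "y = z(b := i)" by (auto simp: g_def)
      have "y \<in> PiE (insert b S0) (\<lambda>_. {..<d})" using z i by (auto simp: y Inv_def PiE_iff extensional_def)
      moreover have "y (p k) = y k" if "k \<in> insert b S0" for k
      proof (cases "k = b")
        case True then show ?thesis using pb by simp
      next
        case False then have "k \<in> S0" using that by simp
        then show ?thesis using z pS bS by (auto simp: y Inv_def)
      qed
      ultimately show "y \<in> Inv d (insert b S0) p" by (simp add: Inv_def)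
    qed
  qed
  then show ?thesis using bij_betw_same_card card_cartesian_product by (metis card_lessThan)
qed

lemma Inv_insert_other:
  assumes fin: "finite S0" and bS: "b \<notin> S0" and p: "p permutes S0" and c: "c \<in> S0"
  shows "card (Inv d (insert b S0) (transpose b c \<circ> p)) = card (Inv d S0 p)"
proof -
  have pb: "p b = b" using permutes_not_in[OF p bS] .
  have pS: "p k \<in> S0" if "k \<in> S0" for k using permutes_in_image[OF p] that by simp
  have cb: "c \<noteq> b" using c bS by auto
  let ?\<pi> = "transpose b c \<circ> p"
  have char: "y \<in> Inv d (insert b S0) ?\<pi> \<longleftrightarrow> y \<in> PiE (insert b S0) (\<lambda>_. {..<d}) \<and> y b = y c \<and> (\<forall>k\<in>S0. y (p k) = y k)" for y
  proof
    assume y: "y \<in> Inv d (insert b S0) ?\<pi>"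
    then have yi: "\<And>k. k \<in> insert b S0 \<Longrightarrow> y (?\<pi> k) = y k" by (auto simp: Inv_def)
    have ybc: "y b = y c" using yi[of b] pb by simp
    have "y (p k) = y k" if k: "k \<in> S0" for k
    proof (cases "p k = c")
      case True
      then have "?\<pi> k = b" by simp
      then show ?thesis using yi[of k] k True ybc by simp
    next
      case False
      have "p k \<noteq> b" using pS[OF k] bS by auto
      then have "?\<pi> k = p k" using False by (simp add: transpose_def)
      then show ?thesis using yi[of k] k by simp
    qed
    then show "y \<in> PiE (insert b S0) (\<lambda>_. {..<d}) \<and> y b = y c \<and> (\<forall>k\<in>S0. y (p k) = y k)"
      using y ybc by (auto simp: Inv_def)
  next
    assume H: "y \<in> PiE (insert b S0) (\<lambda>_. {..<d}) \<and> y b = y c \<and> (\<forall>k\<in>S0. y (p k) = y k)"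
    have "y (?\<pi> k) = y k" if k: "k \<in> insert b S0" for k
    proof (cases "k = b")
      case True then show ?thesis using pb H by simp
    next
      case False
      then have k0: "k \<in> S0" using k by simp
      have "p k \<noteq> b" using pS[OF k0] bS by auto
      then show ?thesis using H k0 by (cases "p k = c") (auto simp: transpose_def)
    qed
    then show "y \<in> Inv d (insert b S0) ?\<pi>" using H by (simp add: Inv_def)
  qed
  define f where "f = (\<lambda>y::nat\<Rightarrow>nat. restrict y S0)"
  define g where "g = (\<lambda>z::nat\<Rightarrow>nat. z(b := z c))"
  have "bij_betw f (Inv d (insert b S0) ?\<pi>) (Inv d S0 p)"
  proof (rule bij_betw_byWitness[where f'=g])
    show "\<forall>y\<in>Inv d (insert b S0) ?\<pi>. g (f y) = y"
    proof
      fix y assume y: "y \<in> Inv d (insert b S0) ?\<pi>"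
      then have H: "y \<in> PiE (insert b S0) (\<lambda>_. {..<d}) \<and> y b = y c \<and> (\<forall>k\<in>S0. y (p k) = y k)"
        using char by blast
      show "g (f y) = y"
      proof
        fix k show "g (f y) k = y k"
          using H c cb by (cases "k = b"; cases "k \<in> S0") (auto simp: f_def g_def PiE_iff extensional_def)
      qed
    qed
    show "\<forall>z\<in>Inv d S0 p. f (g z) = z"
    proof
      fix z assume z: "z \<in> Inv d S0 p"
      show "f (g z) = z"
      proof
        fix k show "f (g z) k = z k"
          using z bS by (cases "k \<in> S0") (auto simp: f_def g_def Inv_def PiE_iff extensional_def)
      qed
    qed
    show "f ` Inv d (insert b S0) ?\<pi> \<subseteq> Inv d S0 p"
    proof
      fix w assume "w \<in> f ` Inv d (insert b S0) ?\<pi>"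
      then obtain y where y: "y \<in> Inv d (insert b S0) ?\<pi>" and w: "w = f y" by auto
      then have H: "y \<in> PiE (insert b S0) (\<lambda>_. {..<d}) \<and> y b = y c \<and> (\<forall>k\<in>S0. y (p k) = y k)"
        using char by blast
      then show "w \<in> Inv d S0 p" using pS by (auto simp: w f_def Inv_def PiE_iff)
    qed
    show "g ` Inv d S0 p \<subseteq> Inv d (insert b S0) ?\<pi>"
    proof
      fix w assume "w \<in> g ` Inv d S0 p"
      then obtain z where z: "z \<in> Inv d S0 p" and w: "w = g z" by auto
      have "w \<in> PiE (insert b S0) (\<lambda>_. {..<d})" using z c by (auto simp: w g_def Inv_def PiE_iff extensional_def)
      moreover have "w b = w c" using cb by (simp add: w g_def)
      moreover have "\<forall>k\<in>S0. w (p k) = w k" using z pS bS by (auto simp: w g_def Inv_def)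
      ultimately show "w \<in> Inv d (insert b S0) ?\<pi>" using char by blast
    qed
  qed
  then show ?thesis by (rule bij_betw_same_card)
qed

lemma Inv_insert:
  assumes fin: "finite S0" and bS: "b \<notin> S0" and p: "p permutes S0" and c: "c \<in> insert b S0"
  shows "card (Inv d (insert b S0) (transpose b c \<circ> p)) = (if c = b then d else 1) * card (Inv d S0 p)"
proof (cases "c = b")
  case True then show ?thesis using Inv_insert_same[OF fin bS p] by simp
next
  case False then show ?thesis using Inv_insert_other[OF fin bS p] c by simp
qed

lemma G_formula:
  assumes "finite S"
  shows "(\<Sum>p\<in>{p. p permutes S}. card (Inv d S p)) = (\<Prod>i<card S. d + i)"
  using assms
proof (induction S rule: finite_induct)
  case empty
  have "Inv d {} p = {\<lambda>_. undefined}" for p by (auto simp: Inv_def)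
  then show ?case by (simp add: permutes_empty)
next
  case (insert b S0)
  have "(\<Sum>p\<in>{p. p permutes insert b S0}. card (Inv d (insert b S0) p))
     = (\<Sum>c\<in>insert b S0. \<Sum>q\<in>{p. p permutes S0}. card (Inv d (insert b S0) (transpose b c \<circ> q)))"
    by (rule sum_over_permutations_insert[OF insert(1,2)])
  also have "\<dots> = (\<Sum>c\<in>insert b S0. \<Sum>q\<in>{p. p permutes S0}. (if c = b then d else 1) * card (Inv d S0 q))"
    using Inv_insert[OF insert(1,2)] by (intro sum.cong refl) auto
  also have "\<dots> = (\<Sum>c\<in>insert b S0. (if c = b then d else 1)) * (\<Prod>i<card S0. d + i)"
    by (simp add: sum_distrib_left[symmetric] sum_distrib_right insert.IH)
  also have "(\<Sum>c\<in>insert b S0. (if c = b then d else 1)) = d + card S0"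
  proof -
    have "S0 \<inter> - {b} = S0" using insert(2) by auto
    then show ?thesis using insert(1,2) by (simp add: sum.If_cases)
  qed
  finally show ?case using insert(1,2) by (simp add: mult.commute)
qed



lemma Inv_value:
  assumes fin: "finite S" and a: "a \<in> S" and \<pi>: "\<pi> permutes S" and p: "p < d"
  shows "d * card {y\<in>Inv d S \<pi>. y a = p} = card (Inv d S \<pi>)"
proof -
  define A where "A = (\<lambda>i. {y\<in>Inv d S \<pi>. y a = i})"
  have piS: "\<pi> k \<in> S" if "k \<in> S" for k using permutes_in_image[OF \<pi>] that by simp
  have eq: "card (A p') = card (A p)" if p': "p' < d" for p'
  proof -
    define f where "f = (\<lambda>y::nat\<Rightarrow>nat. restrict (transpose p p' \<circ> y) S)"
    have ff: "f (f y) = y" if "y \<in> Inv d S \<pi>" for y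
    proof
      fix k show "f (f y) k = y k" using that by (cases "k \<in> S") (auto simp: f_def Inv_def PiE_iff extensional_def)
    qed
    have tl: "transpose p p' v < d" if "v < d" for v using that p p' by (auto simp: transpose_def)
    have fI: "f y \<in> Inv d S \<pi>" if "y \<in> Inv d S \<pi>" for y
      using that tl piS by (auto simp: f_def Inv_def PiE_iff)
    have "bij_betw f (A p') (A p)"
      by (rule bij_betw_byWitness[where f'=f]) (use ff fI a in \<open>auto simp: A_def f_def\<close>)
    then show ?thesis by (rule bij_betw_same_card)
  qed
  have U: "Inv d S \<pi> = (\<Union>i\<in>{..<d}. A i)"
    using a by (auto simp: A_def Inv_def PiE_iff)
  have "card (Inv d S \<pi>) = (\<Sum>i\<in>{..<d}. card (A i))"
    unfolding U by (rule card_UN_disjoint) (auto simp: A_def finite_Inv[OF fin])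
  also have "\<dots> = d * card (A p)" using eq by simp
  finally show ?thesis by (simp add: A_def)
qed

lemma perm_fix_last:
  assumes fin: "finite S" and \<pi>: "\<pi> permutes S" and b: "b \<in> S"
    and H: "\<forall>k\<in>S-{b}. x (\<pi> k) = x k"
  shows "x (\<pi> b) = x b"
proof -
  define v where "v = x (\<pi> b)"
  have "(\<Sum>k\<in>S. (if x (\<pi> k) = v then 1 else 0::nat)) = (\<Sum>k\<in>S. (if x k = v then 1 else 0))"
    using sum.reindex_bij_betw[OF permutes_imp_bij[OF \<pi>], of "\<lambda>j. if x j = v then 1 else (0::nat)"] by simp
  moreover have "(\<Sum>k\<in>S. (if x (\<pi> k) = v then 1 else 0::nat)) = 1 + (\<Sum>k\<in>S-{b}. (if x k = v then 1 else 0))"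
    using sum.remove[OF fin b, of "\<lambda>k. if x (\<pi> k) = v then 1 else (0::nat)"] H by (simp add: v_def)
  moreover have "(\<Sum>k\<in>S. (if x k = v then 1 else 0::nat)) = (if x b = v then 1 else 0) + (\<Sum>k\<in>S-{b}. (if x k = v then 1 else 0))"
    using sum.remove[OF fin b, of "\<lambda>k. if x k = v then 1 else (0::nat)"] by simp
  ultimately have "(if x b = v then 1 else 0::nat) = 1" by linarith
  then have "x b = v" by (cases "x b = v") simp_all
  then show ?thesis by (simp add: v_def)
qed

lemma pi_perm:
  assumes s: "\<sigma> \<in> Sigma_ab N a b" and a: "a \<in> {1..N}" and b: "b \<in> {1..N}"
  shows "transpose 0 a \<circ> \<sigma> permutes {1..N}"
    "\<And>k. k \<in> {1..N}-{b} \<Longrightarrow> (transpose 0 a \<circ> \<sigma>) k = \<sigma> k"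
    "(transpose 0 a \<circ> \<sigma>) b = a"
proof -
  note D = Sigma_abD[OF s]
  have P: "transpose 0 a \<circ> \<sigma> permutes {0..N}"
    using a by (intro permutes_compose D(1) permutes_swap_id) auto
  have "(transpose 0 a \<circ> \<sigma>) 0 = 0" using D by simp
  moreover have "x = 0" if "x \<in> {0..N} - {1..N}" for x using that by auto
  ultimately show "transpose 0 a \<circ> \<sigma> permutes {1..N}" by (intro permutes_superset[OF P]) auto
  show "(transpose 0 a \<circ> \<sigma>) k = \<sigma> k" if "k \<in> {1..N}-{b}" for k
    using Sigma_ab_range[OF s a b that] by (auto simp: transpose_def)
  show "(transpose 0 a \<circ> \<sigma>) b = a" using D by simp
qed

lemma PT:
  assumes d: "0 < d" and a: "a \<in> {1..N}" and b: "b \<in> {1..N}" and s: "\<sigma> \<in> Sigma_ab N a b"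
    and p: "p < d" and q: "q < d"
  shows "card {x\<in>DS d N. x 0 = p \<and> Ent N a b \<sigma> x (x(0:=q))}
     = (if p = q then card {y\<in>Inv d {1..N} (transpose 0 a \<circ> \<sigma>). y a = p} else 0)"
proof -
  define \<pi> where "\<pi> = transpose 0 a \<circ> \<sigma>"
  note PP = pi_perm[OF s a b, folded \<pi>_def]
  have b0: "b \<noteq> 0" using b by auto
  have char: "(x 0 = p \<and> Ent N a b \<sigma> x (x(0:=q))) \<longleftrightarrow> (p = q \<and> x 0 = p \<and> x a = p \<and> (\<forall>k\<in>{1..N}. x (\<pi> k) = x k))" for x
  proof
    assume H: "x 0 = p \<and> Ent N a b \<sigma> x (x(0:=q))"
    then have xa: "x a = p" and xb: "x b = q" and xk: "\<forall>k\<in>{1..N}-{b}. x (\<pi> k) = x k"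
      using b0 PP(2) unfolding Ent_def by auto
    have "x (\<pi> b) = x b" by (rule perm_fix_last[OF _ PP(1) b xk]) simp
    then have "x a = x b" using PP(3) by simp
    then have pq: "p = q" using xa xb by simp
    have "\<forall>k\<in>{1..N}. x (\<pi> k) = x k"
      using xk \<open>x (\<pi> b) = x b\<close> by auto
    then show "p = q \<and> x 0 = p \<and> x a = p \<and> (\<forall>k\<in>{1..N}. x (\<pi> k) = x k)" using pq H xa by simp
  next
    assume H: "p = q \<and> x 0 = p \<and> x a = p \<and> (\<forall>k\<in>{1..N}. x (\<pi> k) = x k)"
    have "x b = q" using H PP(3) b by (metis)
    moreover have "x (\<sigma> k) = x k" if k: "k \<in> {1..N}-{b}" for k
    proof -
      have "\<forall>k\<in>{1..N}. x (\<pi> k) = x k" using H by (rule conjunct2[OF conjunct2[OF conjunct2]])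
      then have "x (\<pi> k) = x k" using k by simp
      then show ?thesis using PP(2)[OF k] by simp
    qed
    ultimately show "x 0 = p \<and> Ent N a b \<sigma> x (x(0:=q))"
      using H b0 unfolding Ent_def by auto
  qed
  show ?thesis
  proof (cases "p = q")
    case False
    then have "{x\<in>DS d N. x 0 = p \<and> Ent N a b \<sigma> x (x(0:=q))} = {}" using char by blast
    then show ?thesis using False by (metis card.empty)
  next
    case True
    have e: "{x\<in>DS d N. x 0 = p \<and> Ent N a b \<sigma> x (x(0:=q))} = {x\<in>DS d N. x 0 = p \<and> x a = p \<and> (\<forall>k\<in>{1..N}. x (\<pi> k) = x k)}"
      using char True by blast
    define f where "f = (\<lambda>x::nat\<Rightarrow>nat. restrict x {1..N})"
    define g where "g = (\<lambda>y::nat\<Rightarrow>nat. y(0 := p))"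
    have piS: "\<pi> k \<in> {1..N}" if "k \<in> {1..N}" for k using permutes_in_image[OF PP(1)] that by simp
    have "bij_betw f {x\<in>DS d N. x 0 = p \<and> x a = p \<and> (\<forall>k\<in>{1..N}. x (\<pi> k) = x k)} {y\<in>Inv d {1..N} \<pi>. y a = p}"
    proof (rule bij_betw_byWitness[where f'=g])
      show "\<forall>x\<in>{x\<in>DS d N. x 0 = p \<and> x a = p \<and> (\<forall>k\<in>{1..N}. x (\<pi> k) = x k)}. g (f x) = x"
      proof
        fix x assume x: "x \<in> {x\<in>DS d N. x 0 = p \<and> x a = p \<and> (\<forall>k\<in>{1..N}. x (\<pi> k) = x k)}"
        show "g (f x) = x"
        proof
          fix k show "g (f x) k = x k"
            using x by (cases "k = 0"; cases "k \<in> {1..N}") (auto simp: f_def g_def DS_iff)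
        qed
      qed
      show "\<forall>y\<in>{y\<in>Inv d {1..N} \<pi>. y a = p}. f (g y) = y"
      proof
        fix y assume y: "y \<in> {y\<in>Inv d {1..N} \<pi>. y a = p}"
        show "f (g y) = y"
        proof
          fix k show "f (g y) k = y k"
            using y by (cases "k \<in> {1..N}") (auto simp: f_def g_def Inv_def PiE_iff extensional_def)
        qed
      qed
      show "f ` {x\<in>DS d N. x 0 = p \<and> x a = p \<and> (\<forall>k\<in>{1..N}. x (\<pi> k) = x k)} \<subseteq> {y\<in>Inv d {1..N} \<pi>. y a = p}"
        using a piS by (auto simp: f_def Inv_def DS_iff PiE_iff)
      show "g ` {y\<in>Inv d {1..N} \<pi>. y a = p} \<subseteq> {x\<in>DS d N. x 0 = p \<and> x a = p \<and> (\<forall>k\<in>{1..N}. x (\<pi> k) = x k)}"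
      proof
        fix x assume "x \<in> g ` {y\<in>Inv d {1..N} \<pi>. y a = p}"
        then obtain y where y: "y \<in> Inv d {1..N} \<pi>" "y a = p" and x: "x = g y" by auto
        have "x \<in> DS d N"
          unfolding DS_iff using y p by (auto simp: x g_def Inv_def PiE_iff extensional_def)
        moreover have "x 0 = p" "x a = p" using y a by (auto simp: x g_def)
        moreover have "\<forall>k\<in>{1..N}. x (\<pi> k) = x k"
        proof
          fix k assume k: "k \<in> {1..N}"
          have "\<pi> k \<in> {1..N}" using piS[OF k] .
          then have "x (\<pi> k) = y (\<pi> k)" "x k = y k" using k by (auto simp: x g_def)
          moreover have "y (\<pi> k) = y k" using y(1) k by (auto simp: Inv_def)
          ultimately show "x (\<pi> k) = x k" by simp
        qed
        ultimately show "x \<in> {x\<in>DS d N. x 0 = p \<and> x a = p \<and> (\<forall>k\<in>{1..N}. x (\<pi> k) = x k)}" by simp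
      qed
    qed
    then have "card {x\<in>DS d N. x 0 = p \<and> x a = p \<and> (\<forall>k\<in>{1..N}. x (\<pi> k) = x k)} = card {y\<in>Inv d {1..N} \<pi>. y a = p}"
      by (rule bij_betw_same_card)
    then show ?thesis using True e by (simp add: \<pi>_def)
  qed
qed



lemma sum_Sigma_Inv:
  assumes a: "a \<in> {1..N}" and b: "b \<in> {1..N}"
  shows "(\<Sum>\<sigma>\<in>Sigma_ab N a b. card (Inv d {1..N} (transpose 0 a \<circ> \<sigma>)))
     = (if a = b then d else 1) * (\<Prod>i<N-1. d + i)"
proof -
  define S0 where "S0 = {1..N} - {b}"
  have S: "{1..N} = insert b S0" and bS: "b \<notin> S0" and fin: "finite S0" and cS: "card S0 = N - 1"
    using b by (auto simp: S0_def)
  have "(\<Sum>\<sigma>\<in>Sigma_ab N a b. card (Inv d {1..N} (transpose 0 a \<circ> \<sigma>)))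
      = (\<Sum>p\<in>{p::nat\<Rightarrow>nat. p permutes S0}. card (Inv d {1..N} (transpose 0 a \<circ> ((transpose 0 a \<circ> transpose a b) \<circ> p))))"
    using sum.reindex_bij_betw[OF Sigma_ab_param[OF a b], of "\<lambda>\<sigma>. card (Inv d {1..N} (transpose 0 a \<circ> \<sigma>))"]
    by (simp add: S0_def)
  also have "\<dots> = (\<Sum>p\<in>{p. p permutes S0}. card (Inv d (insert b S0) (transpose b a \<circ> p)))"
  proof (intro sum.cong refl)
    fix p :: "nat \<Rightarrow> nat"
    have e: "transpose 0 a \<circ> ((transpose 0 a \<circ> transpose a b) \<circ> p) = transpose b a \<circ> p"
      by (rule ext) (simp add: transpose_commute)
    show "card (Inv d {1..N} (transpose 0 a \<circ> ((transpose 0 a \<circ> transpose a b) \<circ> p))) = card (Inv d (insert b S0) (transpose b a \<circ> p))"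
      by (simp only: S[symmetric] e)
  qed
  also have "\<dots> = (\<Sum>p\<in>{p. p permutes S0}. (if a = b then d else 1) * card (Inv d S0 p))"
  proof (intro sum.cong refl)
    fix p assume "p \<in> {p. p permutes S0}"
    then show "card (Inv d (insert b S0) (transpose b a \<circ> p)) = (if a = b then d else 1) * card (Inv d S0 p)"
      using Inv_insert[OF fin bS, of p a] a S by auto
  qed
  also have "\<dots> = (if a = b then d else 1) * (\<Prod>i<N-1. d + i)"
    by (simp add: sum_distrib_left[symmetric] G_formula[OF fin] cS)
  finally show ?thesis .
qed

lemma U_ptrace:
  assumes d: "0 < d" and a: "a \<in> {1..N}" and b: "b \<in> {1..N}" and p: "p < d" and q: "q < d"
  shows "(\<Sum>x\<in>{x\<in>DS d N. x 0 = p}. U N a b x (x(0:=q)))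
     = (if p = q then (if a = b then real d else 1) * real (\<Prod>i<N-1. d + i) / real d else 0)"
proof -
  have fin: "finite {x\<in>DS d N. x 0 = p}" using finite_DS by simp
  have "(\<Sum>x\<in>{x\<in>DS d N. x 0 = p}. U N a b x (x(0:=q)))
      = (\<Sum>\<sigma>\<in>Sigma_ab N a b. \<Sum>x\<in>{x\<in>DS d N. x 0 = p}. if Ent N a b \<sigma> x (x(0:=q)) then 1 else 0)"
    unfolding U_def by (rule sum.swap)
  also have "\<dots> = (\<Sum>\<sigma>\<in>Sigma_ab N a b. real (card {x\<in>DS d N. x 0 = p \<and> Ent N a b \<sigma> x (x(0:=q))}))"
  proof (intro sum.cong refl)
    fix \<sigma>
    have "{x\<in>{x\<in>DS d N. x 0 = p}. Ent N a b \<sigma> x (x(0:=q))} = {x\<in>DS d N. x 0 = p \<and> Ent N a b \<sigma> x (x(0:=q))}" by auto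
    then show "(\<Sum>x\<in>{x\<in>DS d N. x 0 = p}. if Ent N a b \<sigma> x (x(0:=q)) then 1 else 0) = real (card {x\<in>DS d N. x 0 = p \<and> Ent N a b \<sigma> x (x(0:=q))})"
      using sum_indicator_card[OF fin, of "\<lambda>x. Ent N a b \<sigma> x (x(0:=q))"] by simp
  qed
  also have "\<dots> = (\<Sum>\<sigma>\<in>Sigma_ab N a b. if p = q then real (card (Inv d {1..N} (transpose 0 a \<circ> \<sigma>))) / real d else 0)"
  proof (intro sum.cong refl)
    fix \<sigma> assume s: "\<sigma> \<in> Sigma_ab N a b"
    have "d * card {y\<in>Inv d {1..N} (transpose 0 a \<circ> \<sigma>). y a = p} = card (Inv d {1..N} (transpose 0 a \<circ> \<sigma>))"
      by (rule Inv_value[OF _ a pi_perm(1)[OF s a b] p]) simp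
    then have h: "real d * real (card {y\<in>Inv d {1..N} (transpose 0 a \<circ> \<sigma>). y a = p}) = real (card (Inv d {1..N} (transpose 0 a \<circ> \<sigma>)))"
      by (simp only: of_nat_mult[symmetric])
    have hh: "real (card {y\<in>Inv d {1..N} (transpose 0 a \<circ> \<sigma>). y a = p}) = real (card (Inv d {1..N} (transpose 0 a \<circ> \<sigma>))) / real d"
      using h d by (simp add: eq_divide_eq mult.commute)
    then show "real (card {x\<in>DS d N. x 0 = p \<and> Ent N a b \<sigma> x (x(0:=q))}) = (if p = q then real (card (Inv d {1..N} (transpose 0 a \<circ> \<sigma>))) / real d else 0)"
      unfolding PT[OF d a b s p q] using hh by (auto simp del: One_nat_def)
  qed
  also have "\<dots> = (if p = q then real (\<Sum>\<sigma>\<in>Sigma_ab N a b. card (Inv d {1..N} (transpose 0 a \<circ> \<sigma>))) / real d else 0)"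
    by (simp add: sum_divide_distrib)
  also have "\<dots> = (if p = q then (if a = b then real d else 1) * real (\<Prod>i<N-1. d + i) / real d else 0)"
    unfolding sum_Sigma_Inv[OF a b] by simp
  finally show ?thesis .
qed

lemma T_ptrace:
  fixes \<beta> :: "nat \<Rightarrow> real"
  assumes d: "0 < d" and p: "p < d" and q: "q < d"
  shows "(\<Sum>x\<in>{x\<in>DS d N. x 0 = p}. T N \<beta> x (x(0:=q)))
     = (if p = q then real (\<Prod>i<N-1. d + i) / (fact (N-1) * real d) *
          ((real d - 1) * (\<Sum>i=1..N. (\<beta> i)\<^sup>2) + (\<Sum>i=1..N. \<beta> i)\<^sup>2) else 0)"
proof -
  let ?I = "{1..N}" and ?X = "{x\<in>DS d N. x 0 = p}" and ?G = "real (\<Prod>i<N-1. d + i)"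
  have "(\<Sum>x\<in>?X. T N \<beta> x (x(0:=q))) = (\<Sum>a\<in>?I. \<Sum>b\<in>?I. \<beta> a * \<beta> b / fact (N - 1) * (\<Sum>x\<in>?X. U N a b x (x(0:=q))))"
    unfolding T_def
    apply (rule trans[OF sum.swap]) apply (rule sum.cong[OF refl])
    apply (rule trans[OF sum.swap]) apply (rule sum.cong[OF refl])
    by (simp add: sum_distrib_left)
  also have "\<dots> = (\<Sum>a\<in>?I. \<Sum>b\<in>?I. (if p = q then ?G / (fact (N-1) * real d) else 0) * (\<beta> a * \<beta> b * (if a = b then real d else 1)))"
    using d by (intro sum.cong refl) (auto simp: U_ptrace[OF d _ _ p q] field_simps)
  also have "\<dots> = (if p = q then ?G / (fact (N-1) * real d) else 0) *
      (\<Sum>a\<in>?I. \<Sum>b\<in>?I. \<beta> a * \<beta> b * (if a = b then real d else 1))"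
    by (simp add: sum_distrib_left)
  also have "\<dots> = (if p = q then ?G / (fact (N-1) * real d) *
          ((real d - 1) * (\<Sum>i=1..N. (\<beta> i)\<^sup>2) + (\<Sum>i=1..N. \<beta> i)\<^sup>2) else 0)"
    using kappa_sum[where \<beta>=\<beta> and N=N and d=d] by simp
  finally show ?thesis .
qed

lemma ptrace_reindex:
  assumes d: "0 < d" and p: "p < d" and q: "q < d"
  shows "(\<Sum>r<d^N. F (Xs d N (p*d^N + r)) (Xs d N (q*d^N + r))) = (\<Sum>x\<in>{x\<in>DS d N. x 0 = p}. F x (x(0:=q)))"
proof -
  have Xq: "Xs d N (q*d^N + r) = (Xs d N (p*d^N + r))(0 := q)" if r: "r < d^N" for r
  proof
    fix k show "Xs d N (q*d^N + r) k = ((Xs d N (p*d^N + r))(0 := q)) k"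
    proof (cases "k \<in> {0..N}")
      case True
      then show ?thesis using dig_split[OF d q r, of k] dig_split[OF d p r, of k] by (auto simp: Xs_def)
    next
      case False then show ?thesis by (auto simp: Xs_def)
    qed
  qed
  have lt: "p*d^N + r < d^(N+1)" if "r < d^N" for r using lt_pow_Suc[OF p that] .
  have inj: "inj_on (\<lambda>r. Xs d N (p*d^N + r)) {..<d^N}"
  proof (rule inj_onI)
    fix r r' assume "r \<in> {..<d^N}" "r' \<in> {..<d^N}" "Xs d N (p*d^N + r) = Xs d N (p*d^N + r')"
    then have "p*d^N + r = p*d^N + r'" by (intro inj_onD[OF Xs_inj[of d N]]) (use lt in auto)
    then show "r = r'" by simp
  qed
  have img: "(\<lambda>r. Xs d N (p*d^N + r)) ` {..<d^N} = {x\<in>DS d N. x 0 = p}"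
  proof
    show "(\<lambda>r. Xs d N (p*d^N + r)) ` {..<d^N} \<subseteq> {x\<in>DS d N. x 0 = p}"
    proof
      fix x assume "x \<in> (\<lambda>r. Xs d N (p*d^N + r)) ` {..<d^N}"
      then obtain r where r: "r < d^N" and x: "x = Xs d N (p*d^N + r)" by auto
      have "x 0 = p" using dig_split[OF d p r, of 0] by (simp add: x Xs_def)
      then show "x \<in> {x\<in>DS d N. x 0 = p}" using Xs_in[OF d] x by simp
    qed
    show "{x\<in>DS d N. x 0 = p} \<subseteq> (\<lambda>r. Xs d N (p*d^N + r)) ` {..<d^N}"
    proof
      fix x assume x: "x \<in> {x\<in>DS d N. x 0 = p}"
      obtain m where m: "m < d^(N+1)" "Xs d N m = x" using Xs_surj[OF d] x by blast
      have "m div d^N = p" using div_dig0[OF m(1)] m(2) x by (auto simp: Xs_def)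
      then have "m = p*d^N + m mod d^N" by (metis div_mult_mod_eq)
      moreover have "m mod d^N < d^N" using d by simp
      ultimately show "x \<in> (\<lambda>r. Xs d N (p*d^N + r)) ` {..<d^N}" using m(2) by (metis image_eqI lessThan_iff)
    qed
  qed
  have "(\<Sum>r<d^N. F (Xs d N (p*d^N + r)) (Xs d N (q*d^N + r))) = (\<Sum>r<d^N. (\<lambda>x. F x (x(0:=q))) (Xs d N (p*d^N + r)))"
    using Xq by simp
  also have "\<dots> = (\<Sum>x\<in>{x\<in>DS d N. x 0 = p}. F x (x(0:=q)))"
    by (rule sum.reindex_bij_betw[OF bij_betw_imageI[OF inj img]])
  finally show ?thesis .
qed

lemma prod_choose:
  assumes "1 \<le> d"
  shows "(\<Prod>i<n. d + i) = fact n * ((n + d - 1) choose n)"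
proof (induction n)
  case 0 then show ?case by simp
next
  case (Suc n)
  define m where "m = n + d - 1"
  have hm: "d + n = Suc m" and hm2: "Suc n + d - 1 = Suc m" using assms by (simp_all add: m_def)
  have "(\<Prod>i<Suc n. d + i) = (\<Prod>i<n. d + i) * (d + n)" by simp
  also have "\<dots> = fact n * (m choose n) * Suc m" using Suc.IH hm by (simp add: m_def)
  also have "\<dots> = fact n * (Suc m * (m choose n))" by (simp only: mult.assoc mult.commute mult.left_commute)
  also have "\<dots> = fact n * (Suc n * (Suc m choose Suc n))" by (simp only: Suc_times_binomial)
  also have "\<dots> = fact (Suc n) * ((Suc n + d - 1) choose Suc n)" by (simp only: hm2 fact_Suc of_nat_id mult.assoc mult.commute mult.left_commute)
  finally show ?case .
qed



lemma mat_adjoint_index: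
  assumes "i < dim_col A" "j < dim_row A"
  shows "mat_adjoint A $$ (i,j) = conjugate (A $$ (j,i))"
  using assms by (simp add: mat_adjoint_def mat_of_rows_def)

lemma mat_adjoint_dims: "dim_row (mat_adjoint A) = dim_col A" "dim_col (mat_adjoint A) = dim_row A"
  by (simp_all add: mat_adjoint_def mat_of_rows_def)

lemma psd_proj:
  fixes A :: "complex mat"
  assumes A: "A \<in> carrier_mat n n" and herm: "mat_adjoint A = A" and idem: "A * A = A" and c: "0 \<le> c"
  shows "psd (complex_of_real c \<cdot>\<^sub>m A)"
proof -
  let ?B = "complex_of_real c \<cdot>\<^sub>m A"
  have dims: "dim_row A = n" "dim_col A = n" using A by auto
  have hA: "A $$ (j,i) = cnj (A $$ (i,j))" if "i < n" "j < n" for i j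
  proof -
    have "mat_adjoint A $$ (i,j) = cnj (A $$ (j,i))" using mat_adjoint_index[of i A j] that dims by simp
    then show ?thesis using herm by simp
  qed
  have iA: "A $$ (i,j) = (\<Sum>k<n. A $$ (i,k) * A $$ (k,j))" if "i < n" "j < n" for i j
  proof -
    have "A $$ (i,j) = (A * A) $$ (i,j)" using idem by simp
    also have "\<dots> = (\<Sum>k<n. A $$ (i,k) * A $$ (k,j))"
      using that dims by (simp add: scalar_prod_def lessThan_atLeast0)
    finally show ?thesis .
  qed
  have sq: "square_mat ?B" using dims by simp
  have hB: "mat_adjoint ?B = ?B"
  proof (rule eq_matI)
    show "dim_row (mat_adjoint ?B) = dim_row ?B" "dim_col (mat_adjoint ?B) = dim_col ?B"
      using dims by (simp_all add: mat_adjoint_dims)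
    fix i j assume "i < dim_row ?B" "j < dim_col ?B"
    then have i: "i < n" and j: "j < n" using dims by auto
    show "mat_adjoint ?B $$ (i,j) = ?B $$ (i,j)"
      using mat_adjoint_index[of i ?B j] i j dims hA[OF i j] by simp
  qed
  have qf: "0 \<le> Re (conjugate v \<bullet> (?B *\<^sub>v v))" if v: "v \<in> carrier_vec n" for v
  proof -
    have dv: "dim_vec v = n" using v by auto
    define w where "w = (\<lambda>k. \<Sum>i<n. cnj (v $ i) * A $$ (i,k))"
    have cw: "cnj (w k) = (\<Sum>j<n. A $$ (k,j) * v $ j)" if k: "k < n" for k
    proof -
      have "cnj (w k) = (\<Sum>i<n. v $ i * cnj (A $$ (i,k)))" unfolding w_def by (simp add: cnj_sum)
      also have "\<dots> = (\<Sum>j<n. A $$ (k,j) * v $ j)"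
      proof (rule sum.cong[OF refl])
        fix i assume "i \<in> {..<n}"
        then have "A $$ (i,k) = cnj (A $$ (k,i))" using hA[of k i] k by simp
        then show "v $ i * cnj (A $$ (i,k)) = A $$ (k,i) * v $ i" by simp
      qed
      finally show ?thesis .
    qed
    have "conjugate v \<bullet> (?B *\<^sub>v v) = (\<Sum>i<n. cnj (v $ i) * (\<Sum>j<n. complex_of_real c * A $$ (i,j) * v $ j))"
      using dv dims by (simp add: scalar_prod_def lessThan_atLeast0 sum_distrib_left mult.assoc)
    also have "\<dots> = (\<Sum>i<n. \<Sum>j<n. \<Sum>k<n. complex_of_real c * ((cnj (v $ i) * A $$ (i,k)) * (A $$ (k,j) * v $ j)))"
    proof (rule sum.cong[OF refl])
      fix i assume i: "i \<in> {..<n}"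
      have "cnj (v $ i) * (\<Sum>j<n. complex_of_real c * A $$ (i,j) * v $ j) = (\<Sum>j<n. cnj (v $ i) * (complex_of_real c * A $$ (i,j) * v $ j))"
        by (simp add: sum_distrib_left)
      also have "\<dots> = (\<Sum>j<n. \<Sum>k<n. complex_of_real c * ((cnj (v $ i) * A $$ (i,k)) * (A $$ (k,j) * v $ j)))"
      proof (rule sum.cong[OF refl])
        fix j assume j: "j \<in> {..<n}"
        show "cnj (v $ i) * (complex_of_real c * A $$ (i,j) * v $ j) = (\<Sum>k<n. complex_of_real c * ((cnj (v $ i) * A $$ (i,k)) * (A $$ (k,j) * v $ j)))"
          using i j by (subst iA) (simp_all add: sum_distrib_left sum_distrib_right mult.assoc mult.left_commute)
      qed
      finally show "cnj (v $ i) * (\<Sum>j<n. complex_of_real c * A $$ (i,j) * v $ j) = (\<Sum>j<n. \<Sum>k<n. complex_of_real c * ((cnj (v $ i) * A $$ (i,k)) * (A $$ (k,j) * v $ j)))" .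
    qed
    also have "\<dots> = (\<Sum>k<n. \<Sum>i<n. \<Sum>j<n. complex_of_real c * ((cnj (v $ i) * A $$ (i,k)) * (A $$ (k,j) * v $ j)))"
    proof -
      have "(\<Sum>i<n. \<Sum>j<n. \<Sum>k<n. complex_of_real c * ((cnj (v $ i) * A $$ (i,k)) * (A $$ (k,j) * v $ j)))
          = (\<Sum>i<n. \<Sum>k<n. \<Sum>j<n. complex_of_real c * ((cnj (v $ i) * A $$ (i,k)) * (A $$ (k,j) * v $ j)))"
        by (rule sum.cong[OF refl], rule sum.swap)
      also have "\<dots> = (\<Sum>k<n. \<Sum>i<n. \<Sum>j<n. complex_of_real c * ((cnj (v $ i) * A $$ (i,k)) * (A $$ (k,j) * v $ j)))"
        by (rule sum.swap)
      finally show ?thesis .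
    qed
    also have "\<dots> = (\<Sum>k<n. complex_of_real c * (w k * cnj (w k)))"
    proof (rule sum.cong[OF refl])
      fix k assume k: "k \<in> {..<n}"
      have "complex_of_real c * (w k * cnj (w k)) = complex_of_real c * ((\<Sum>i<n. cnj (v $ i) * A $$ (i,k)) * (\<Sum>j<n. A $$ (k,j) * v $ j))"
      proof -
        have kk: "k < n" using k by simp
        show ?thesis unfolding cw[OF kk] by (simp only: w_def)
      qed
      also have "\<dots> = (\<Sum>i<n. \<Sum>j<n. complex_of_real c * ((cnj (v $ i) * A $$ (i,k)) * (A $$ (k,j) * v $ j)))"
        by (subst sum_product) (simp only: sum_distrib_left)
      finally show "(\<Sum>i<n. \<Sum>j<n. complex_of_real c * ((cnj (v $ i) * A $$ (i,k)) * (A $$ (k,j) * v $ j))) = complex_of_real c * (w k * cnj (w k))"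
        by simp
    qed
    also have "\<dots> = complex_of_real (\<Sum>k<n. c * ((Re (w k))\<^sup>2 + (Im (w k))\<^sup>2))"
      by (simp add: complex_mult_cnj)
    finally have "Re (conjugate v \<bullet> (?B *\<^sub>v v)) = (\<Sum>k<n. c * ((Re (w k))\<^sup>2 + (Im (w k))\<^sup>2))" by simp
    also have "\<dots> \<ge> 0" using c by (intro sum_nonneg) simp
    finally show ?thesis .
  qed
  show ?thesis unfolding psd_def using sq hB qf dims by simp
qed

lemma t2a: fixes a b c e g h :: real assumes "a \<noteq> 0"
  shows "a / b * (c / e) * (g / (h * a)) = (g * c) / (e * h * b)"
proof -
  have "a / b * (c / e) * (g / (h * a)) = (a * c * g) / (b * e * (h * a))" by (simp add: times_divide_times_eq)
  also have "\<dots> = (a * (c * g)) / (a * (b * e * h))" by (simp add: ac_simps)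
  also have "\<dots> = (c * g) / (b * e * h)" using assms by (rule mult_divide_mult_cancel_left)
  also have "\<dots> = (g * c) / (e * h * b)" by (simp add: ac_simps)
  finally show ?thesis .
qed

lemma const_one:
  assumes d: "2 \<le> d" and N: "1 \<le> N"
  shows "real d / real ((N + d - 1) choose N) * (real (N + d - 1) / real N) *
         (real (\<Prod>i<N-1. d + i) / (fact (N-1) * real d)) = 1"
proof -
  obtain M where M: "N = Suc M" using N by (cases N) auto
  define G where "G = (\<Prod>i<M. d + i)"
  define C where "C = (M + d) choose Suc M"
  have "(\<Prod>i<Suc M. d + i) = fact (Suc M) * ((Suc M + d - 1) choose Suc M)"
    using prod_choose[of d "Suc M"] d by simp
  then have e: "G * (d + M) = fact (Suc M) * C" by (simp add: G_def C_def)
  have e': "real G * real (M + d) = real (Suc M) * fact M * real C"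
  proof -
    have "real (G * (d + M)) = real (fact (Suc M) * C)" using e by simp
    then show ?thesis by (simp add: algebra_simps)
  qed
  have C0: "real C \<noteq> 0" using d by (simp add: C_def)
  have f0: "(fact M :: real) \<noteq> 0" by simp
  have d0: "real d \<noteq> 0" using d by simp
  have "real d / real C * (real (M + d) / real (Suc M)) * (real G / (fact M * real d))
      = (real G * real (M + d)) / (real (Suc M) * fact M * real C)"
    by (rule t2a[OF d0])
  also have "\<dots> = 1" unfolding e' using C0 f0 by simp
  finally have main: "real d / real C * (real (M + d) / real (Suc M)) * (real G / (fact M * real d)) = 1" .
  have h1: "N + d - 1 = M + d" "N - 1 = M" using M by simp_all
  show ?thesis unfolding h1 unfolding M G_def[symmetric] C_def[symmetric] using main by simp
qed

lemma ptrace_Cbeta: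
  fixes \<beta> :: "nat \<Rightarrow> real"
  assumes d: "2 \<le> d" and N: "1 \<le> N"
    and lam: "(real d - 1) * (\<Sum>i=1..N. (\<beta> i)\<^sup>2) + (\<Sum>i=1..N. \<beta> i)\<^sup>2 = 1"
  shows "ptrace_rest d N (Cbeta d N \<beta>) = 1\<^sub>m d"
proof (rule eq_matI)
  have d0: "0 < d" using d by simp
  let ?s = "real d / real ((N + d - 1) choose N) * (real (N + d - 1) / real N)"
  show "dim_row (ptrace_rest d N (Cbeta d N \<beta>)) = dim_row (1\<^sub>m d)"
       "dim_col (ptrace_rest d N (Cbeta d N \<beta>)) = dim_col (1\<^sub>m d)"
    by (simp_all add: ptrace_rest_def)
  fix p q assume "p < dim_row (1\<^sub>m d)" "q < dim_col (1\<^sub>m d)"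
  then have p: "p < d" and q: "q < d" by auto
  have lt: "x*d^N + r < d^(N+1)" if "x < d" "r < d^N" for x r using lt_pow_Suc[OF that] .
  have "ptrace_rest d N (Cbeta d N \<beta>) $$ (p,q) = (\<Sum>r<d^N. Cbeta d N \<beta> $$ (p*d^N + r, q*d^N + r))"
    using p q by (simp add: ptrace_rest_def)
  also have "\<dots> = (\<Sum>r<d^N. complex_of_real (?s * T N \<beta> (Xs d N (p*d^N + r)) (Xs d N (q*d^N + r))))"
  proof (intro sum.cong refl)
    fix r assume "r \<in> {..<d^N}"
    then have r: "r < d^N" by simp
    show "Cbeta d N \<beta> $$ (p*d^N + r, q*d^N + r) = complex_of_real (?s * T N \<beta> (Xs d N (p*d^N + r)) (Xs d N (q*d^N + r)))"
      using lt[OF p r] lt[OF q r] Ctilde_entry[OF d0 lt[OF p r] lt[OF q r]]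
      by (simp add: Cbeta_def Ctilde_def)
  qed
  also have "\<dots> = complex_of_real (?s * (\<Sum>r<d^N. T N \<beta> (Xs d N (p*d^N + r)) (Xs d N (q*d^N + r))))"
    by (simp add: sum_distrib_left)
  also have "\<dots> = complex_of_real (?s * (\<Sum>x\<in>{x\<in>DS d N. x 0 = p}. T N \<beta> x (x(0:=q))))"
    using ptrace_reindex[OF d0 p q, of "T N \<beta>"] by simp
  also have "\<dots> = complex_of_real (if p = q then 1 else 0)"
  proof -
    have cs: "?s * (if p = q then real (\<Prod>i<N-1. d + i) / (fact (N-1) * real d) * 1 else 0) = (if p = q then 1 else 0)"
      using const_one[OF d N] by (cases "p = q") (simp_all only: if_True if_False mult_zero_right mult_1_right simp_thms)
    show ?thesis unfolding T_ptrace[OF d0 p q] lam cs ..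
  qed
  finally show "ptrace_rest d N (Cbeta d N \<beta>) $$ (p,q) = 1\<^sub>m d $$ (p,q)" using p q by simp
qed

lemma Ctilde_nonzero:
  fixes \<beta> :: "nat \<Rightarrow> real"
  assumes d: "2 \<le> d" and a0: "a0 \<in> {1..N}" and b0: "\<beta> a0 \<noteq> 0"
  shows "\<exists>r<d^(N+1). Ctilde d N \<beta> $$ (r,r) \<noteq> 0"
proof -
  have d0: "0 < d" using d by simp
  define x0 where "x0 = (\<lambda>k\<in>{0..N}. if k = 0 \<or> k = a0 then 1 else (0::nat))"
  have x0D: "x0 \<in> DS d N" using d by (auto simp: x0_def DS_def)
  obtain r where r: "r < d^(N+1)" "Xs d N r = x0" using Xs_surj[OF d0 x0D] by blast
  have U0: "U N a b x0 x0 = (if a = a0 \<and> b = a0 then fact (N-1) else 0)" if a: "a \<in> {1..N}" and b: "b \<in> {1..N}" for a b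
  proof (cases "a = a0 \<and> b = a0")
    case True
    have "Ent N a b \<sigma> x0 x0" if s: "\<sigma> \<in> Sigma_ab N a b" for \<sigma>
    proof -
      have "x0 (\<sigma> k) = x0 k" if k: "k \<in> {1..N}-{b}" for k
        using Sigma_ab_range[OF s a b k] k True by (auto simp: x0_def)
      then show ?thesis using True a by (auto simp: Ent_def x0_def)
    qed
    then have "U N a b x0 x0 = real (card (Sigma_ab N a b))" by (simp add: U_def)
    then show ?thesis using card_Sigma_ab[OF a b] True by simp
  next
    case False
    have "\<not> Ent N a b \<sigma> x0 x0" for \<sigma> using False a b by (auto simp: Ent_def x0_def)
    then show ?thesis using False by (simp add: U_def)
  qed
  have "T N \<beta> x0 x0 = (\<Sum>a\<in>{1..N}. \<Sum>b\<in>{1..N}. (if a = a0 then (if b = a0 then \<beta> a0 * \<beta> a0 else 0) else 0))"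
    unfolding T_def by (intro sum.cong refl) (auto simp: U0)
  also have "\<dots> = (\<Sum>a\<in>{1..N}. if a = a0 then \<beta> a0 * \<beta> a0 else 0)"
    by (intro sum.cong refl) (use a0 in auto)
  also have "\<dots> = \<beta> a0 * \<beta> a0" using a0 by simp
  finally have "T N \<beta> x0 x0 \<noteq> 0" using b0 by simp
  then show ?thesis using Ctilde_entry[OF d0 r(1) r(1)] r by auto
qed



lemma smult_one_mat: "(1::complex) \<cdot>\<^sub>m A = A"
  by (rule eq_matI) auto

theorem mainTheorem11:
  fixes d N :: nat and \<beta> :: "nat \<Rightarrow> real"
  assumes "d \<ge> 2" and "N \<ge> 1"
    and "\<exists>a\<in>{1..N}. \<exists>b\<in>{1..N}. \<beta> a * \<beta> b \<noteq> 0"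
  shows "(orth_proj (Ctilde d N \<beta>) \<longleftrightarrow>
            (real d - 1) * (\<Sum>i=1..N. (\<beta> i)\<^sup>2) + (\<Sum>i=1..N. \<beta> i)\<^sup>2 = 1)
     \<and> ((real d - 1) * (\<Sum>i=1..N. (\<beta> i)\<^sup>2) + (\<Sum>i=1..N. \<beta> i)\<^sup>2 = 1 \<longrightarrow>
            psd (Cbeta d N \<beta>) \<and> ptrace_rest d N (Cbeta d N \<beta>) = 1\<^sub>m d
            \<and> is_channel_choi d N (Cbeta d N \<beta>))"
proof -
  let ?l = "(real d - 1) * (\<Sum>i=1..N. (\<beta> i)\<^sup>2) + (\<Sum>i=1..N. \<beta> i)\<^sup>2"
  let ?C = "Ctilde d N \<beta>"
  have d0: "0 < d" using assms(1) by simp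
  obtain a0 b0 where a0: "a0 \<in> {1..N}" and ab: "\<beta> a0 * \<beta> b0 \<noteq> 0" using assms(3) by blast
  have b0: "\<beta> a0 \<noteq> 0" using ab by auto
  have sq: "?C * ?C = complex_of_real ?l \<cdot>\<^sub>m ?C" by (rule Ctilde_sq[OF d0])
  have herm: "mat_adjoint ?C = ?C" by (rule Ctilde_herm[OF d0])
  have car: "?C \<in> carrier_mat (d^(N+1)) (d^(N+1))" by (rule Ctilde_dim)
  have idem_of: "?C * ?C = ?C" if l: "?l = 1"
    using sq unfolding l of_real_1 smult_one_mat .
  have iff: "orth_proj ?C \<longleftrightarrow> ?l = 1"
  proof
    assume "orth_proj ?C"
    then have CC: "?C * ?C = ?C" by (simp add: orth_proj_def)
    obtain r where r: "r < d^(N+1)" and nz: "?C $$ (r,r) \<noteq> 0"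
      using Ctilde_nonzero[where \<beta>=\<beta>, OF assms(1) a0 b0] by blast
    have "(complex_of_real ?l \<cdot>\<^sub>m ?C) $$ (r,r) = ?C $$ (r,r)" using sq CC by simp
    then have "complex_of_real ?l * ?C $$ (r,r) = ?C $$ (r,r)" using r car by simp
    then have "complex_of_real ?l = 1" using nz by simp
    then show "?l = 1" by (metis of_real_eq_1_iff)
  next
    assume l: "?l = 1"
    show "orth_proj ?C" unfolding orth_proj_def using idem_of[OF l] herm car by simp
  qed
  have part2: "psd (Cbeta d N \<beta>) \<and> ptrace_rest d N (Cbeta d N \<beta>) = 1\<^sub>m d \<and> is_channel_choi d N (Cbeta d N \<beta>)"
    if l: "?l = 1"
  proof -
    have nn: "0 \<le> real d / real ((N + d - 1) choose N) * (real (N + d - 1) / real N)" by simp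
    have P: "psd (Cbeta d N \<beta>)" unfolding Cbeta_def by (rule psd_proj[OF car herm idem_of[OF l] nn])
    have T: "ptrace_rest d N (Cbeta d N \<beta>) = 1\<^sub>m d" by (rule ptrace_Cbeta[OF assms(1,2) l])
    have "Cbeta d N \<beta> \<in> carrier_mat (d^(N+1)) (d^(N+1))" using car by (simp add: Cbeta_def)
    then show ?thesis using P T by (simp add: is_channel_choi_def)
  qed
  show ?thesis using iff part2 by blast
qed


end
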